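(* Let $g_2,g_3\in\mathbb{R}$ with $\Delta=g_2^3-27g_3^2>0$, and let $w>0$ real and $w'$ purely imaginary with $\mathrm{Im}\,w'>0$ be the fundamental half-periods. For \[ \widetilde{\Psi}_x(k,l)=\frac{\sigma(x+k+l+w')}{\sigma(x+w')\sigma(k+l)}e^{-(\zeta(k)+\zeta(l))x-\zeta(w')(k+l)} \] write $\widetilde{\Psi}_x(k,l)=v(x;k,l)e^{\frac{p(k)+p(l)}{w}x}$, where \[ v(x;a,b)=\frac{\sigma(x+w'+a+b)}{\sigma(x+w')\sigma(a+b)}e^{-\zeta(w')(a+b)-\frac{(a+b)\zeta(w)}{w}x},\qquad p(a)=a\zeta(w)-w\zeta(a). \] Then: (1) $\widetilde{\Psi}_x(k+2w,l)=-\widetilde{\Psi}_x(k,l)$ and $\widetilde{\Psi}_x(k+2w',l)=\widetilde{\Psi}_x(k,l)$. (2) $v(x+2w;k,l)=v(x;k,l)$. (3) $p(k+2w)=p(k)$, $p(k+2w')=p(k)+\pi\mathrm{i}$, $p(-k)=-p(k)$. When $k\in(0,w']$ or $k\in(w,w+w']$, $p(k)$ is purely imaginary; when $k\in(w',w+w')$, $p(k)$ is complex with imaginary part always $\frac{\pi}{2}$; when $k\in(0,w]$, $p(k)$ is real and varies monotonically from $-\infty$ at the origin to $0$ at $w$. Here $(c,d)$, $[c,d]$ etc. for $c,d\in\mathbb{C}$ denote segments in the complex plane from $c$ to $d$.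
   Context: $\sigma,\zeta,\wp$ are the Weierstrass sigma, zeta and elliptic functions with real invariants $g_2,g_3$ ($(\wp')^2=4\wp^3-g_2\wp-g_3$, $\zeta=\sigma'/\sigma$, $\wp=-\zeta'$), with period lattice generated by $2w,2w'$. *)

theory Defs
  imports "HOL-Analysis.Analysis"
begin

definition wlattice :: "complex \<Rightarrow> complex \<Rightarrow> complex set" where
  "wlattice w w' = {2 * of_int m * w + 2 * of_int n * w' | m n. True}"

definition wsigma :: "complex \<Rightarrow> complex \<Rightarrow> complex \<Rightarrow> complex" where
  "wsigma w w' z = lim (\<lambda>N::nat. z * (\<Prod>(m, n) \<in> ({- int N..int N} \<times> {- int N..int N}) - {(0, 0)}.
      (let \<omega> = 2 * of_int m * w + 2 * of_int n * w'
       in (1 - z / \<omega>) * exp (z / \<omega> + z\<^sup>2 / (2 * \<omega>\<^sup>2)))))"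

definition wzeta :: "complex \<Rightarrow> complex \<Rightarrow> complex \<Rightarrow> complex" where
  "wzeta w w' z = deriv (wsigma w w') z / wsigma w w' z"

definition wp :: "complex \<Rightarrow> complex \<Rightarrow> complex \<Rightarrow> complex" where
  "wp w w' z = - deriv (wzeta w w') z"

definition PsiT :: "complex \<Rightarrow> complex \<Rightarrow> complex \<Rightarrow> complex \<Rightarrow> complex \<Rightarrow> complex" where
  "PsiT w w' x k l =
     wsigma w w' (x + k + l + w') / (wsigma w w' (x + w') * wsigma w w' (k + l))
     * exp (- (wzeta w w' k + wzeta w w' l) * x - wzeta w w' w' * (k + l))"

definition vfun :: "complex \<Rightarrow> complex \<Rightarrow> complex \<Rightarrow> complex \<Rightarrow> complex \<Rightarrow> complex" where
  "vfun w w' x a b =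
     wsigma w w' (x + w' + a + b) / (wsigma w w' (x + w') * wsigma w w' (a + b))
     * exp (- wzeta w w' w' * (a + b) - (a + b) * wzeta w w' w / w * x)"

definition pfun :: "complex \<Rightarrow> complex \<Rightarrow> complex \<Rightarrow> complex" where
  "pfun w w' a = a * wzeta w w' w - w * wzeta w w' a"

end

theory Submission
  imports Defs "HOL-Complex_Analysis.Complex_Analysis"
begin

definition om :: "complex \<Rightarrow> complex \<Rightarrow> int \<Rightarrow> int \<Rightarrow> complex" where
  "om w w' m n = 2 * of_int m * w + 2 * of_int n * w'"

definition Sq :: "nat \<Rightarrow> (int \<times> int) set" where
  "Sq N = {- int N..int N} \<times> {- int N..int N}"

definition shell :: "nat \<Rightarrow> (int \<times> int) set" where
  "shell k = (if k = 0 then Sq 0 else Sq k - Sq (k - 1))"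

lemma finite_Sq [simp]: "finite (Sq N)"
  by (simp add: Sq_def)

lemma finite_shell [simp]: "finite (shell k)"
  by (simp add: shell_def)

lemma Sq_mono: "N \<le> M \<Longrightarrow> Sq N \<subseteq> Sq M"
  by (auto simp: Sq_def)

lemma Sq_Suc: "Sq (Suc N) = Sq N \<union> shell (Suc N)"
  using Sq_mono[of N "Suc N"] by (auto simp: shell_def)

lemma Sq_shell_disj: "Sq N \<inter> shell (Suc N) = {}"
  by (auto simp: shell_def)

lemma sum_shells: "(\<Sum>k<Suc N. \<Sum>p\<in>shell k. g p) = (\<Sum>p\<in>Sq N. g p)"
proof (induction N)
  case 0
  then show ?case by (simp add: shell_def)
next
  case (Suc N)
  have "(\<Sum>k<Suc (Suc N). \<Sum>p\<in>shell k. g p) = (\<Sum>p\<in>Sq N. g p) + (\<Sum>p\<in>shell (Suc N). g p)"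
    using Suc by simp
  also have "\<dots> = (\<Sum>p\<in>Sq (Suc N). g p)"
    unfolding Sq_Suc by (rule sum.union_disjoint[symmetric]) (use Sq_shell_disj in auto)
  finally show ?case .
qed

lemma prod_shells: "(\<Prod>k<Suc N. \<Prod>p\<in>shell k. g p) = (\<Prod>p\<in>Sq N. g p)"
proof (induction N)
  case 0
  then show ?case by (simp add: shell_def)
next
  case (Suc N)
  have "(\<Prod>k<Suc (Suc N). \<Prod>p\<in>shell k. g p) = (\<Prod>p\<in>Sq N. g p) * (\<Prod>p\<in>shell (Suc N). g p)"
    using Suc by simp
  also have "\<dots> = (\<Prod>p\<in>Sq (Suc N). g p)"
    unfolding Sq_Suc by (rule prod.union_disjoint[symmetric]) (use Sq_shell_disj in auto)
  finally show ?case .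
qed

lemma shell_nonzero: "k \<noteq> 0 \<Longrightarrow> p \<in> shell k \<Longrightarrow> p \<noteq> (0, 0)"
  by (auto simp: shell_def Sq_def)

lemma shell_0: "shell 0 = {(0,0)}"
  by (auto simp: shell_def Sq_def)

lemma shell_big: "k \<noteq> 0 \<Longrightarrow> (m, n) \<in> shell k \<Longrightarrow> \<bar>m\<bar> \<ge> int k \<or> \<bar>n\<bar> \<ge> int k"
  by (auto simp: shell_def Sq_def)

lemma card_Sq: "card (Sq N) = (2 * N + 1)^2"
proof -
  have "card {- int N..int N} = 2 * N + 1" by simp
  then show ?thesis by (simp add: Sq_def card_cartesian_product power2_eq_square)
qed

lemma card_shell: "k \<noteq> 0 \<Longrightarrow> card (shell k) = 8 * k"
proof -
  assume k: "k \<noteq> 0"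
  then obtain j where j: "k = Suc j" by (cases k) auto
  have "card (shell k) = card (Sq k) - card (Sq j)"
    using k j Sq_mono[of j k] by (simp add: shell_def card_Diff_subset)
  also have "\<dots> = (2 * k + 1)^2 - (2 * j + 1)^2" by (simp add: card_Sq)
  also have "\<dots> = 8 * k" using j by (simp add: power2_eq_square algebra_simps)
  finally show ?thesis .
qed

locale wl =
  fixes w w' :: complex
  assumes w_real: "Im w = 0" and w_pos: "Re w > 0"
    and w'_imag: "Re w' = 0" and w'_pos: "Im w' > 0"
begin

definition cc :: real where "cc = min (Re w) (Im w')"

lemma cc_pos: "cc > 0" using w_pos w'_pos by (simp add: cc_def)

lemma Re_om: "Re (om w w' m n) = 2 * of_int m * Re w"
  using w'_imag by (simp add: om_def)

lemma Im_om: "Im (om w w' m n) = 2 * of_int n * Im w'"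
  using w_real by (simp add: om_def)

lemma om_shell_bound:
  assumes "k \<noteq> 0" "(m, n) \<in> shell k"
  shows "norm (om w w' m n) \<ge> 2 * cc * k"
proof -
  from shell_big[OF assms] show ?thesis
  proof
    assume h: "\<bar>m\<bar> \<ge> int k"
    have "cc * k \<le> Re w * \<bar>of_int m\<bar>"
      using h cc_pos w_pos unfolding cc_def
      by (intro mult_mono) auto
    hence "2 * cc * k \<le> 2 * \<bar>of_int m\<bar> * Re w" by (simp add: mult.commute)
    also have "\<dots> = \<bar>Re (om w w' m n)\<bar>" using w_pos by (simp add: Re_om abs_mult)
    also have "\<dots> \<le> norm (om w w' m n)" by (rule abs_Re_le_cmod)
    finally show ?thesis .
  next
    assume h: "\<bar>n\<bar> \<ge> int k"
    have "cc * k \<le> Im w' * \<bar>of_int n\<bar>"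
      using h cc_pos w'_pos unfolding cc_def
      by (intro mult_mono) auto
    hence "2 * cc * k \<le> 2 * \<bar>of_int n\<bar> * Im w'" by (simp add: mult.commute)
    also have "\<dots> = \<bar>Im (om w w' m n)\<bar>" using w'_pos by (simp add: Im_om abs_mult)
    also have "\<dots> \<le> norm (om w w' m n)" by (rule abs_Im_le_cmod)
    finally show ?thesis .
  qed
qed

end



lemma norm_prod_minus1_le':
  fixes f :: "'b \<Rightarrow> 'a :: {real_normed_div_algebra,comm_ring_1}"
  shows "norm (prod (\<lambda>n. 1 + f n) A - 1) \<le> prod (\<lambda>n. 1 + norm (f n)) A - 1"
proof (induction A rule: infinite_finite_induct)
  case (insert x A)
  from insert.hyps have
    "norm ((\<Prod>n\<in>insert x A. 1 + f n) - 1) =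
       norm ((\<Prod>n\<in>A. 1 + f n) - 1 + f x * (\<Prod>n\<in>A. 1 + f n))"
    by (simp add: algebra_simps)
  also have "\<dots> \<le> norm ((\<Prod>n\<in>A. 1 + f n) - 1) + norm (f x * (\<Prod>n\<in>A. 1 + f n))"
    by (rule norm_triangle_ineq)
  also have "norm (f x * (\<Prod>n\<in>A. 1 + f n)) = norm (f x) * (\<Prod>x\<in>A. norm (1 + f x))"
    by (simp add: prod_norm norm_mult)
  also have "(\<Prod>x\<in>A. norm (1 + f x)) \<le> (\<Prod>x\<in>A. norm (1::'a) + norm (f x))"
    by (intro prod_mono norm_triangle_ineq ballI conjI) auto
  also have "norm (1::'a) = 1" by simp
  also note insert.IH
  also have "(\<Prod>n\<in>A. 1 + norm (f n)) - 1 + norm (f x) * (\<Prod>x\<in>A. 1 + norm (f x)) =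
             (\<Prod>n\<in>insert x A. 1 + norm (f n)) - 1"
    using insert.hyps by (simp add: algebra_simps)
  finally show ?case by - (simp_all add: mult_left_mono)
qed simp_all

lemma exp_minus1_le: "0 \<le> (t::real) \<Longrightarrow> exp t - 1 \<le> t * exp t"
proof -
  assume t: "0 \<le> t"
  have "1 + (-t) \<le> exp (-t)" by (rule exp_ge_add_one_self)
  hence "(1 - t) * exp t \<le> exp (-t) * exp t" by (intro mult_right_mono) auto
  also have "exp (-t) * exp t = 1" by (simp add: exp_minus field_simps)
  finally show ?thesis by (simp add: algebra_simps)
qed

lemma prod_le_exp_sum:
  fixes f :: "'b \<Rightarrow> real"
  assumes "\<And>x. x \<in> A \<Longrightarrow> 0 \<le> f x"
  shows "(\<Prod>x\<in>A. 1 + f x) \<le> exp (\<Sum>x\<in>A. f x)"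
proof (cases "finite A")
  case True
  have "(\<Prod>x\<in>A. 1 + f x) \<le> (\<Prod>x\<in>A. exp (f x))"
    by (intro prod_mono) (use assms in auto)
  also have "\<dots> = exp (\<Sum>x\<in>A. f x)" using True by (simp add: exp_sum)
  finally show ?thesis .
qed simp

lemma wf2: "weierstrass_factor 2 u = (1 - u) * exp (u + u^2 / 2)"
  by (simp add: weierstrass_factor_def eval_nat_numeral)

lemma wf2': "weierstrass_factor 2 (z / \<omega>) = (1 - z / \<omega>) * exp (z / \<omega> + z\<^sup>2 / (2 * \<omega>\<^sup>2))"
proof (cases "\<omega> = 0")
  case False
  have "(z / \<omega>)^2 / 2 = z\<^sup>2 / (2 * \<omega>\<^sup>2)" using False by (simp add: power_divide field_simps)
  thus ?thesis by (simp only: wf2)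
qed (simp add: wf2)

lemma mem_Sq: "(m, n) \<in> Sq N \<longleftrightarrow> \<bar>m\<bar> \<le> int N \<and> \<bar>n\<bar> \<le> int N"
  by (auto simp: Sq_def)

lemma in_some_shell: "(m, n) \<in> shell (nat (max \<bar>m\<bar> \<bar>n\<bar>))"
proof (cases "max \<bar>m\<bar> \<bar>n\<bar> = 0")
  case True
  hence "m = 0" "n = 0" by auto
  thus ?thesis by (simp add: shell_def Sq_def)
next
  case False
  define k where "k = nat (max \<bar>m\<bar> \<bar>n\<bar>)"
  have pos: "max \<bar>m\<bar> \<bar>n\<bar> > 0" using False abs_ge_zero[of m] abs_ge_zero[of n]
    by (simp add: max_def split: if_splits)
  have k0: "k \<noteq> 0" using pos unfolding k_def by arith
  have ik: "int k = max \<bar>m\<bar> \<bar>n\<bar>" using pos by (simp add: k_def)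
  have 1: "(m, n) \<in> Sq k" unfolding mem_Sq ik by simp
  have 2: "(m, n) \<notin> Sq (k - 1)"
  proof
    assume "(m, n) \<in> Sq (k - 1)"
    hence "\<bar>m\<bar> \<le> int (k - 1)" "\<bar>n\<bar> \<le> int (k - 1)" unfolding mem_Sq by auto
    moreover have "int (k - 1) = max \<bar>m\<bar> \<bar>n\<bar> - 1" using k0 ik by (simp add: of_nat_diff)
    ultimately show False by linarith
  qed
  have "(m, n) \<noteq> (0, 0)" using False by auto
  show ?thesis using 1 2 k0 \<open>(m, n) \<noteq> (0, 0)\<close> unfolding k_def[symmetric] shell_def by (simp del: mem_Sigma_iff)
qed

lemma wlattice_iff: "z \<in> wlattice w w' \<longleftrightarrow> (\<exists>m n. z = om w w' m n)"
  by (auto simp: wlattice_def om_def)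

context wl
begin

definition sg :: "int \<times> int \<Rightarrow> complex \<Rightarrow> complex" where
  "sg p z = (if p = (0,0) then z else weierstrass_factor 2 (z / om w w' (fst p) (snd p)))"

definition SF :: "nat \<Rightarrow> complex \<Rightarrow> complex" where
  "SF k z = (\<Prod>p\<in>shell k. sg p z)"

lemma om_eq_0_iff: "om w w' m n = 0 \<longleftrightarrow> m = 0 \<and> n = 0"
proof
  assume h: "om w w' m n = 0"
  have "Re (om w w' m n) = 0" "Im (om w w' m n) = 0" using h by auto
  thus "m = 0 \<and> n = 0" using w_pos w'_pos by (simp add: Re_om Im_om)
qed (simp add: om_def)

lemma wsigma_eq: "wsigma w w' z = lim (\<lambda>N. \<Prod>k<Suc N. SF k z)"
proof -
  have "z * (\<Prod>(m, n) \<in> ({- int N..int N} \<times> {- int N..int N}) - {(0, 0)}.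
      (let \<omega> = 2 * of_int m * w + 2 * of_int n * w'
       in (1 - z / \<omega>) * exp (z / \<omega> + z\<^sup>2 / (2 * \<omega>\<^sup>2)))) = (\<Prod>k<Suc N. SF k z)" for N
  proof -
    have "(\<Prod>k<Suc N. SF k z) = (\<Prod>p\<in>Sq N. sg p z)"
      unfolding SF_def by (rule prod_shells)
    also have "\<dots> = sg (0,0) z * (\<Prod>p\<in>Sq N - {(0,0)}. sg p z)"
      by (rule prod.remove) (auto simp: Sq_def)
    also have "(\<Prod>p\<in>Sq N - {(0,0)}. sg p z) = (\<Prod>(m, n) \<in> Sq N - {(0, 0)}.
      (let \<omega> = 2 * of_int m * w + 2 * of_int n * w'
       in (1 - z / \<omega>) * exp (z / \<omega> + z\<^sup>2 / (2 * \<omega>\<^sup>2))))"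
      by (intro prod.cong refl) (auto simp: sg_def wf2' om_def Let_def)
    finally show ?thesis by (simp add: sg_def Sq_def)
  qed
  thus ?thesis unfolding wsigma_def by presburger
qed

lemma SF_bound:
  assumes z: "norm z \<le> R" and k: "k \<noteq> 0" and Rk: "R \<le> cc * k"
  shows "norm (SF k z - 1) \<le> 3 * R^3 / cc^3 * exp (3 * R^3 / cc^3) / (real k)^2"
proof -
  have R0: "R \<ge> 0" using z norm_ge_zero order_trans by blast
  have kpos: "real k \<ge> 1" using k by simp
  define B where "B = 3 * R^3 / (8 * cc^3 * real k^3)"
  have xb: "norm (sg p z - 1) \<le> B" if p: "p \<in> shell k" for p
  proof -
    obtain m n where p': "p = (m, n)" by (cases p)
    have pnz: "p \<noteq> (0,0)" using shell_nonzero[OF k p] .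
    have om: "norm (om w w' m n) \<ge> 2 * cc * k" using om_shell_bound[OF k p[unfolded p']] .
    have "2 * cc * k > 0" using cc_pos kpos by simp
    hence ompos: "norm (om w w' m n) > 0" using om by linarith
    have "norm (z / om w w' m n) \<le> R / (2 * cc * k)"
      unfolding norm_divide using z om ompos R0 cc_pos kpos
      by (intro frac_le) auto
    also have "\<dots> \<le> 1/2" using Rk cc_pos kpos by (simp add: field_simps)
    finally have h12: "norm (z / om w w' m n) \<le> 1/2" .
    have "norm (sg p z - 1) \<le> 3 * norm (z / om w w' m n) ^ 3"
      using weierstrass_factor_bound[OF h12, of 2] pnz p' by (auto simp: sg_def)
    also have "\<dots> \<le> 3 * (R / (2 * cc * k)) ^ 3"
      using \<open>norm (z / om w w' m n) \<le> R / (2 * cc * k)\<close>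
      by (intro mult_left_mono power_mono) auto
    also have "\<dots> = B" by (simp add: B_def power_divide field_simps)
    finally show ?thesis .
  qed
  have "norm (SF k z - 1) = norm ((\<Prod>p\<in>shell k. 1 + (sg p z - 1)) - 1)"
    by (simp add: SF_def)
  also have "\<dots> \<le> (\<Prod>p\<in>shell k. 1 + norm (sg p z - 1)) - 1"
    by (rule norm_prod_minus1_le')
  also have "\<dots> \<le> exp (\<Sum>p\<in>shell k. norm (sg p z - 1)) - 1"
    using prod_le_exp_sum[of "shell k" "\<lambda>p. norm (sg p z - 1)"] by simp
  also have "(\<Sum>p\<in>shell k. norm (sg p z - 1)) \<le> of_nat (card (shell k)) * B"
    by (rule sum_bounded_above) (use xb in auto)
  also have "of_nat (card (shell k)) * B = 3 * R^3 / (cc^3 * real k^2)"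
    using card_shell[OF k] kpos cc_pos by (simp add: B_def field_simps power3_eq_cube power2_eq_square)
  finally have 1: "norm (SF k z - 1) \<le> exp (3 * R^3 / (cc^3 * real k^2)) - 1" by simp
  define S where "S = 3 * R^3 / (cc^3 * real k^2)"
  have S0: "S \<ge> 0" using R0 cc_pos by (simp add: S_def)
  have SS: "S \<le> 3 * R^3 / cc^3"
  proof -
    have "real k ^ 2 \<ge> 1" using kpos by simp
    hence "cc^3 * 1 \<le> cc^3 * real k^2" using cc_pos by (intro mult_left_mono) auto
    hence "3 * R^3 / (cc^3 * real k^2) \<le> 3 * R^3 / (cc^3 * 1)"
      using R0 cc_pos by (intro frac_le) auto
    thus ?thesis by (simp add: S_def)
  qed
  have "exp S - 1 \<le> S * exp S" by (rule exp_minus1_le[OF S0])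
  also have "\<dots> \<le> S * exp (3 * R^3 / cc^3)" using SS S0 by (intro mult_left_mono) auto
  also have "\<dots> = 3 * R^3 / cc^3 * exp (3 * R^3 / cc^3) / (real k)^2"
    using kpos cc_pos by (simp add: S_def field_simps)
  finally show ?thesis using 1 by (simp add: S_def)
qed

lemma summable_inv_sq: "summable (\<lambda>k. C / (real k)^2)"
proof -
  have "summable (\<lambda>k. C * inverse (real k ^ 2))"
    by (intro summable_mult inverse_power_summable) auto
  thus ?thesis by (simp add: field_simps)
qed

lemma eventually_big: "eventually (\<lambda>k. k \<noteq> 0 \<and> R \<le> cc * real k) sequentially"
proof -
  have "eventually (\<lambda>k. k \<ge> nat \<lceil>R / cc\<rceil> + 1) sequentially" by (rule eventually_ge_at_top)
  thus ?thesis
  proof eventually_elim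
    case (elim k)
    have "R / cc \<le> real k" using elim by linarith
    thus ?case using elim cc_pos by (auto simp: field_simps)
  qed
qed

lemma sg_holo: "sg p holomorphic_on A"
proof (cases "p = (0,0)")
  case True
  then show ?thesis by (simp add: sg_def[abs_def])
next
  case False
  hence "om w w' (fst p) (snd p) \<noteq> 0" by (cases p) (simp add: om_eq_0_iff)
  then show ?thesis using False by (simp add: sg_def[abs_def] holomorphic_intros)
qed

lemma SF_holo: "SF k holomorphic_on A"
  unfolding SF_def[abs_def] by (intro holomorphic_on_prod sg_holo)

lemma SF_cont: "continuous_on A (SF k)"
  by (rule holomorphic_on_imp_continuous_on[OF SF_holo])

lemma SF_unif: "uniformly_convergent_on (cball 0 R) (\<lambda>N z. \<Prod>k<N. SF k z)"
proof (rule uniformly_convergent_on_prod'[OF SF_cont compact_cball])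
  show "uniformly_convergent_on (cball 0 R) (\<lambda>N z. \<Sum>n<N. norm (SF n z - 1))"
  proof (rule Weierstrass_m_test'_ev[OF _ summable_inv_sq])
    show "\<forall>\<^sub>F n in sequentially. \<forall>z\<in>cball 0 R. norm (norm (SF n z - 1)) \<le>
           3 * R^3 / cc^3 * exp (3 * R^3 / cc^3) / (real n)^2"
      using eventually_big[of R]
    proof eventually_elim
      case (elim n)
      show ?case
      proof
        fix z :: complex assume z: "z \<in> cball 0 R"
        have "norm (SF n z - 1) \<le> 3 * R^3 / cc^3 * exp (3 * R^3 / cc^3) / (real n)^2"
          by (rule SF_bound) (use z elim in auto)
        thus "norm (norm (SF n z - 1)) \<le> 3 * R^3 / cc^3 * exp (3 * R^3 / cc^3) / (real n)^2"
          by simp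
      qed
    qed
  qed
qed

lemma SF_abs: "summable (\<lambda>k. norm (SF k z - 1))"
proof (rule summable_comparison_test_ev[OF _ summable_inv_sq])
  show "\<forall>\<^sub>F k in sequentially. norm (norm (SF k z - 1)) \<le>
      3 * norm z^3 / cc^3 * exp (3 * norm z^3 / cc^3) / (real k)^2"
    using eventually_big[of "norm z"]
  proof eventually_elim
    case (elim k)
    have "norm (SF k z - 1) \<le> 3 * norm z^3 / cc^3 * exp (3 * norm z^3 / cc^3) / (real k)^2"
      by (rule SF_bound) (use elim in auto)
    thus ?case by simp
  qed
qed

lemma SF_convergent_prod: "convergent_prod (\<lambda>k. SF k z)"
  by (intro abs_convergent_prod_imp_convergent_prod) (simp add: abs_convergent_prod_conv_summable SF_abs)

lemma SF_lim: "(\<lambda>N. \<Prod>k<Suc N. SF k z) \<longlonglongrightarrow> wsigma w w' z"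
proof -
  have 1: "(\<lambda>N. \<Prod>k<Suc N. SF k z) \<longlonglongrightarrow> prodinf (\<lambda>k. SF k z)"
    using convergent_prod_LIMSEQ[OF SF_convergent_prod] by (simp add: lessThan_Suc_atMost)
  hence "wsigma w w' z = prodinf (\<lambda>k. SF k z)"
    unfolding wsigma_eq by (rule limI)
  thus ?thesis using 1 by simp
qed

lemma sigma_has_prod: "(\<lambda>k. SF k z) has_prod wsigma w w' z"
proof -
  have 1: "(\<lambda>N. \<Prod>k<Suc N. SF k z) \<longlonglongrightarrow> prodinf (\<lambda>k. SF k z)"
    using convergent_prod_LIMSEQ[OF SF_convergent_prod] by (simp add: lessThan_Suc_atMost)
  have "wsigma w w' z = prodinf (\<lambda>k. SF k z)"
    by (rule LIMSEQ_unique[OF SF_lim 1])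
  thus ?thesis using convergent_prod_has_prod[OF SF_convergent_prod] by simp
qed

lemma SF_lim': "(\<lambda>N. \<Prod>k<N. SF k z) \<longlonglongrightarrow> wsigma w w' z"
  using SF_lim[of z] filterlim_sequentially_Suc[of "\<lambda>N. \<Prod>k<N. SF k z"] by simp

lemma sigma_uniform: "uniform_limit (cball 0 R) (\<lambda>N z. \<Prod>k<N. SF k z) (wsigma w w') sequentially"
proof -
  obtain g where g: "uniform_limit (cball 0 R) (\<lambda>N z. \<Prod>k<N. SF k z) g sequentially"
    using SF_unif[of R] by (auto simp: uniformly_convergent_on_def)
  also have "?this \<longleftrightarrow> uniform_limit (cball 0 R) (\<lambda>N z. \<Prod>k<N. SF k z) (wsigma w w') sequentially"
  proof (intro uniform_limit_cong)
    fix z :: complex assume "z \<in> cball 0 R"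
    have "(\<lambda>n. \<Prod>k<n. SF k z) \<longlonglongrightarrow> g z"
      using tendsto_uniform_limitI[OF g \<open>z \<in> cball 0 R\<close>] by simp
    thus "g z = wsigma w w' z" using SF_lim'[of z] by (rule LIMSEQ_unique)
  qed auto
  finally show ?thesis .
qed

lemma sigma_holo: "wsigma w w' holomorphic_on A"
proof (rule holomorphic_on_subset)
  show "wsigma w w' holomorphic_on UNIV"
  proof (rule holomorphic_uniform_sequence)
    fix z :: complex
    have *: "uniform_limit (cball 0 (norm z + 1)) (\<lambda>N z. \<Prod>k<N. SF k z) (wsigma w w') sequentially"
      by (rule sigma_uniform)
    hence "uniform_limit (cball z 1) (\<lambda>N z. \<Prod>k<N. SF k z) (wsigma w w') sequentially"
      by (rule uniform_limit_on_subset) (simp add: cball_subset_cball_iff)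
    thus "\<exists>d>0. cball z d \<subseteq> UNIV \<and> uniform_limit (cball z d) (\<lambda>N z. \<Prod>k<N. SF k z) (wsigma w w') sequentially"
      by (intro exI[of _ 1]) auto
  qed (auto intro!: holomorphic_intros SF_holo)
qed auto

lemma sg_eq_0_iff: "sg p z = 0 \<longleftrightarrow> z = om w w' (fst p) (snd p)"
proof (cases "p = (0,0)")
  case False
  hence "om w w' (fst p) (snd p) \<noteq> 0" by (cases p) (simp add: om_eq_0_iff)
  then show ?thesis using False by (simp add: sg_def wf2)
qed (simp add: sg_def om_def)

lemma sigma_zero_iff: "wsigma w w' z = 0 \<longleftrightarrow> z \<in> wlattice w w'"
proof -
  have "wsigma w w' z = 0 \<longleftrightarrow> 0 \<in> range (\<lambda>k. SF k z)"
    by (rule has_prod_eq_0_iff[OF sigma_has_prod])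
  also have "\<dots> \<longleftrightarrow> (\<exists>k. \<exists>p\<in>shell k. sg p z = 0)"
    by (auto simp: SF_def image_iff)
  also have "\<dots> \<longleftrightarrow> (\<exists>m n. z = om w w' m n)"
  proof
    assume "\<exists>k. \<exists>p\<in>shell k. sg p z = 0"
    then obtain k p where "p \<in> shell k" "sg p z = 0" by blast
    thus "\<exists>m n. z = om w w' m n" unfolding sg_eq_0_iff by blast
  next
    assume "\<exists>m n. z = om w w' m n"
    then obtain m n where mn: "z = om w w' m n" by blast
    have "(m, n) \<in> shell (nat (max \<bar>m\<bar> \<bar>n\<bar>))" by (rule in_some_shell)
    moreover have "sg (m, n) z = 0" unfolding sg_eq_0_iff using mn by simp
    ultimately show "\<exists>k. \<exists>p\<in>shell k. sg p z = 0" by blast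
  qed
  finally show ?thesis by (simp add: wlattice_iff)
qed

end



context wl
begin

abbreviation omp :: "int \<times> int \<Rightarrow> complex" where
  "omp p \<equiv> om w w' (fst p) (snd p)"

abbreviation Lat where "Lat \<equiv> wlattice w w'"

definition tt :: "int \<times> int \<Rightarrow> complex \<Rightarrow> complex" where
  "tt p z = (if p = (0,0) then 1 / z else 1 / (z - omp p) + 1 / omp p + z / (omp p)^2)"

definition tt' :: "int \<times> int \<Rightarrow> complex \<Rightarrow> complex" where
  "tt' p z = (if p = (0,0) then - 1 / z^2 else - 1 / (z - omp p)^2 + 1 / (omp p)^2)"

definition T :: "nat \<Rightarrow> complex \<Rightarrow> complex" where
  "T k z = (\<Sum>p\<in>shell k. tt p z)"

definition T' :: "nat \<Rightarrow> complex \<Rightarrow> complex" where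
  "T' k z = (\<Sum>p\<in>shell k. tt' p z)"

lemma omp_in_Lat: "omp p \<in> Lat"
  by (auto simp: wlattice_iff)

lemma Lat_closed: "closed Lat"
proof -
  have "Lat = {z. wsigma w w' z = 0}" using sigma_zero_iff by auto
  also have "closed \<dots>"
    by (intro closed_Collect_eq continuous_on_const holomorphic_on_imp_continuous_on sigma_holo)
  finally show ?thesis .
qed

lemma open_compl_Lat: "open (- Lat)"
  by (rule open_Compl[OF Lat_closed])

lemma zeta_holo: "wzeta w w' holomorphic_on (- Lat)"
proof -
  have "(\<lambda>z. deriv (wsigma w w') z / wsigma w w' z) holomorphic_on (- Lat)"
    by (intro holomorphic_intros holomorphic_deriv sigma_holo)
       (auto simp: sigma_zero_iff open_compl_Lat)
  thus ?thesis unfolding wzeta_def[abs_def] .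
qed

lemma wp_holo: "wp w w' holomorphic_on (- Lat)"
proof -
  have "(\<lambda>z. - deriv (wzeta w w') z) holomorphic_on (- Lat)"
    by (intro holomorphic_intros holomorphic_deriv zeta_holo open_compl_Lat)
  thus ?thesis unfolding wp_def[abs_def] .
qed

lemma zeta_deriv: "z \<notin> Lat \<Longrightarrow> (wzeta w w' has_field_derivative - wp w w' z) (at z)"
  using holomorphic_derivI[OF zeta_holo open_compl_Lat, of z] by (simp add: wp_def)

lemma wp_deriv: "z \<notin> Lat \<Longrightarrow> (wp w w' has_field_derivative deriv (wp w w') z) (at z)"
  using holomorphic_derivI[OF wp_holo open_compl_Lat, of z] holomorphic_derivI by simp

lemma sigma_deriv: "(wsigma w w' has_field_derivative deriv (wsigma w w') z) (at z)"
  using holomorphic_derivI[OF sigma_holo open_UNIV, of z] by simp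

lemma sg_deriv:
  assumes "sg p z \<noteq> 0"
  shows "(sg p has_field_derivative sg p z * tt p z) (at z)"
proof (cases "p = (0,0)")
  case True
  have e: "sg p = (\<lambda>z. z)" using True by (simp add: sg_def fun_eq_iff)
  have "z \<noteq> 0" using assms e by simp
  then show ?thesis unfolding e using True by (auto simp: tt_def intro!: derivative_eq_intros)
next
  case False
  define \<omega> where "\<omega> = omp p"
  have om0: "\<omega> \<noteq> 0" using False by (cases p) (auto simp: \<omega>_def om_eq_0_iff)
  have zom: "z \<noteq> \<omega>" using assms sg_eq_0_iff[of p z] by (auto simp: \<omega>_def)
  have eq: "sg p = (\<lambda>z. (1 - z / \<omega>) * exp (z / \<omega> + (z / \<omega>)^2 / 2))"
    using False by (auto simp: sg_def wf2 \<omega>_def fun_eq_iff)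
  have "((\<lambda>z. (1 - z / \<omega>) * exp (z / \<omega> + (z / \<omega>)^2 / 2)) has_field_derivative
          (- (1 / \<omega>)) * exp (z / \<omega> + (z / \<omega>)^2 / 2) +
          (1 - z / \<omega>) * (exp (z / \<omega> + (z / \<omega>)^2 / 2) * (1 / \<omega> + (z / \<omega>) * (1 / \<omega>)))) (at z)"
    using om0 by (auto intro!: derivative_eq_intros simp: power2_eq_square field_simps)
  also have "(- (1 / \<omega>)) * exp (z / \<omega> + (z / \<omega>)^2 / 2) +
          (1 - z / \<omega>) * (exp (z / \<omega> + (z / \<omega>)^2 / 2) * (1 / \<omega> + (z / \<omega>) * (1 / \<omega>)))
        = sg p z * tt p z"
    using False om0 zom unfolding eq
    by (simp add: tt_def \<omega>_def[symmetric] field_simps power2_eq_square)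
  finally show ?thesis unfolding eq .
qed

lemma SF_logderiv:
  assumes "z \<notin> Lat"
  shows "deriv (SF k) z / SF k z = T k z"
proof -
  have nz: "sg p z \<noteq> 0" for p
    using assms sg_eq_0_iff omp_in_Lat by metis
  have "(SF k has_field_derivative (SF k z * (\<Sum>p\<in>shell k. (sg p z * tt p z) / sg p z))) (at z)"
    unfolding SF_def[abs_def]
    by (rule has_field_derivative_prod'[of "shell k" sg z, simplified]) (use nz sg_deriv in auto)
  hence "deriv (SF k) z = SF k z * T k z"
    using nz by (simp add: DERIV_imp_deriv T_def)
  moreover have "SF k z \<noteq> 0" using nz by (simp add: SF_def)
  ultimately show ?thesis by simp
qed

lemma zeta_sums:
  assumes "z \<notin> Lat"
  shows "(\<lambda>k. T k z) sums wzeta w w' z"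
proof -
  have "(\<lambda>k. deriv (SF k) z / SF k z) sums (deriv (wsigma w w') z / wsigma w w' z)"
  proof (rule logderiv_prodinf_complex_uniform_limit)
    show "uniform_limit (ball 0 (norm z + 1)) (\<lambda>n x. \<Prod>k<n. SF k x) (wsigma w w') sequentially"
      by (rule uniform_limit_on_subset[OF sigma_uniform[of "norm z + 1"]]) auto
  qed (use assms in \<open>auto simp: SF_holo sigma_zero_iff\<close>)
  thus ?thesis using SF_logderiv[OF assms] by (simp add: wzeta_def)
qed

lemma tt_eq: "p \<noteq> (0,0) \<Longrightarrow> z \<noteq> omp p \<Longrightarrow> tt p z = z^2 / ((omp p)^2 * (z - omp p))"
  by (cases p) (auto simp: tt_def om_eq_0_iff field_simps power2_eq_square)

lemma T_bound:
  assumes z: "norm z < R" and k: "k \<noteq> 0" and Rk: "R \<le> cc * k"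
  shows "norm (T k z) \<le> 2 * R^2 / (cc^3 * (real k)^2)"
proof -
  have R0: "R > 0" using z norm_ge_zero by (meson le_less_trans)
  have kpos: "real k \<ge> 1" using k by simp
  define B where "B = R^2 / (4 * cc^3 * real k^3)"
  have xb: "norm (tt p z) \<le> B" if p: "p \<in> shell k" for p
  proof -
    obtain m n where p': "p = (m, n)" by (cases p)
    have pnz: "p \<noteq> (0,0)" using shell_nonzero[OF k p] .
    define \<omega> where "\<omega> = omp p"
    have om: "norm \<omega> \<ge> 2 * cc * k" using om_shell_bound[OF k p[unfolded p']] p' by (simp add: \<omega>_def)
    have om2: "norm \<omega> \<ge> 2 * R" using om Rk by simp
    have "norm (z - \<omega>) \<ge> norm \<omega> - norm z" by (simp add: norm_minus_commute norm_triangle_ineq2)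
    hence zo: "norm (z - \<omega>) \<ge> norm \<omega> / 2" using om2 z by simp
    have zne: "z \<noteq> \<omega>" using zo om2 R0 by auto
    have "2 * cc * k > 0" using cc_pos kpos by simp
    hence "norm \<omega> > 0" using om by linarith
    have "norm (tt p z) = norm z ^ 2 / (norm \<omega> ^ 2 * norm (z - \<omega>))"
      using tt_eq[OF pnz] zne by (simp add: \<omega>_def norm_divide norm_mult norm_power)
    also have "\<dots> \<le> R ^ 2 / (norm \<omega> ^ 2 * (norm \<omega> / 2))"
      using zo z om2 R0
      by (intro frac_le mult_left_mono power_mono mult_pos_pos) auto
    also have "\<dots> = 2 * R^2 / norm \<omega> ^ 3" by (simp add: power3_eq_cube power2_eq_square)
    also have "\<dots> \<le> 2 * R^2 / (2 * cc * k) ^ 3"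
      using om cc_pos kpos R0 \<open>norm \<omega> > 0\<close> by (intro divide_left_mono power_mono mult_pos_pos) auto
    also have "\<dots> = B" by (simp add: B_def power3_eq_cube)
    finally show ?thesis .
  qed
  have "norm (T k z) \<le> (\<Sum>p\<in>shell k. norm (tt p z))"
    unfolding T_def by (rule norm_sum)
  also have "\<dots> \<le> of_nat (card (shell k)) * B"
    by (rule sum_bounded_above) (use xb in auto)
  also have "\<dots> = 2 * R^2 / (cc^3 * (real k)^2)"
    using card_shell[OF k] kpos cc_pos by (simp add: B_def field_simps power3_eq_cube power2_eq_square)
  finally show ?thesis .
qed

lemma T_deriv:
  assumes "\<And>p. p \<in> shell k \<Longrightarrow> z \<noteq> omp p" "k \<noteq> 0"
  shows "(T k has_field_derivative T' k z) (at z)"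
proof -
  have "((\<lambda>z. \<Sum>p\<in>shell k. tt p z) has_field_derivative (\<Sum>p\<in>shell k. tt' p z)) (at z)"
  proof (rule DERIV_sum)
    fix p assume p: "p \<in> shell k"
    have pnz: "p \<noteq> (0,0)" using shell_nonzero[OF assms(2) p] .
    have om0: "omp p \<noteq> 0" using pnz by (cases p) (auto simp: om_eq_0_iff)
    have zne: "z - omp p \<noteq> 0" using assms(1)[OF p] by simp
    show "((\<lambda>z. tt p z) has_field_derivative tt' p z) (at z)"
      unfolding tt_def tt'_def using pnz om0 zne
      by (auto intro!: derivative_eq_intros simp: power2_eq_square field_simps)
  qed
  thus ?thesis unfolding T_def[abs_def] T'_def .
qed

lemma Lat_ball_Sq:
  assumes "om w w' m n \<in> ball 0 R" "R \<le> cc * K"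
  shows "(m, n) \<in> Sq K"
proof (rule ccontr)
  assume "(m, n) \<notin> Sq K"
  define k where "k = nat (max \<bar>m\<bar> \<bar>n\<bar>)"
  have sh: "(m, n) \<in> shell k" unfolding k_def by (rule in_some_shell)
  have "k > K" using \<open>(m, n) \<notin> Sq K\<close> by (auto simp: k_def mem_Sq)
  hence k0: "k \<noteq> 0" by simp
  have "norm (om w w' m n) \<ge> 2 * cc * k" by (rule om_shell_bound[OF k0 sh])
  moreover have "2 * cc * k \<ge> 2 * cc * K" using \<open>k > K\<close> cc_pos by simp
  ultimately have "norm (om w w' m n) \<ge> 2 * R" using assms(2) by simp
  moreover have "norm (om w w' m n) < R" using assms(1) by simp
  moreover have "R > 0" using assms(1) by (metis dist_0_norm mem_ball norm_ge_zero le_less_trans)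
  ultimately show False by simp
qed

lemma finite_Lat_ball: "finite (Lat \<inter> ball 0 R)"
proof -
  obtain K :: nat where K: "R \<le> cc * K"
    using eventually_big[of R] by (auto simp: eventually_at_top_linorder)
  have "Lat \<inter> ball 0 R \<subseteq> omp ` Sq K"
  proof
    fix z assume z: "z \<in> Lat \<inter> ball 0 R"
    then obtain m n where mn: "z = om w w' m n" by (auto simp: wlattice_iff)
    hence "(m, n) \<in> Sq K" using Lat_ball_Sq[of m n R K] z K by auto
    thus "z \<in> omp ` Sq K" using mn by force
  qed
  thus ?thesis by (rule finite_subset) auto
qed

lemma T_tail:
  fixes R :: real
  assumes R: "R > 0" and K: "K \<noteq> 0" "R \<le> cc * K"
  shows "\<exists>g g'. \<forall>z\<in>ball (0::complex) R. ((\<lambda>n. T (n + K) z) sums g z) \<and> ((\<lambda>n. T' (n + K) z) sums g' z) \<and>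
     (g has_field_derivative g' z) (at z)"
  proof (rule series_and_derivative_comparison[OF open_ball])
    show "summable (\<lambda>n. 2 * R^2 / cc^3 / (real (n + K))^2)"
      using summable_inv_sq[of "2 * R^2 / cc^3"] summable_iff_shift[of "\<lambda>n. 2 * R^2 / cc^3 / (real n)^2" K]
      by simp
    show "(T (n + K) has_field_derivative T' (n + K) z) (at z)" if "z \<in> ball 0 R" for n and z :: complex
    proof (rule T_deriv)
      fix p assume p: "p \<in> shell (n + K)"
      have "norm (omp p) \<ge> 2 * cc * (n + K)"
        using om_shell_bound[of "n + K" "fst p" "snd p"] p K by auto
      moreover have "cc * K \<le> cc * (n + K)" using cc_pos by (intro mult_left_mono) auto
      hence "2 * cc * (n + K) \<ge> 2 * R" using K by linarith
      ultimately show "z \<noteq> omp p" using that R by auto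
    qed (use K in auto)
    show "\<forall>\<^sub>F n in sequentially. \<forall>z\<in>ball (0::complex) R. norm (T (n + K) z) \<le> 2 * R^2 / cc^3 / (real (n + K))^2"
    proof (intro always_eventually allI ballI)
      fix n and z :: complex assume z: "z \<in> ball 0 R"
      have "cc * K \<le> cc * (n + K)" using cc_pos by (intro mult_left_mono) auto
      hence "R \<le> cc * real (n + K)" using K by linarith
      thus "norm (T (n + K) z) \<le> 2 * R^2 / cc^3 / (real (n + K))^2"
        using T_bound[of z R "n + K"] z K by (simp add: field_simps)
    qed
  qed blast

end



context wl
begin

lemma Lat_countable: "countable Lat"
proof -
  have "Lat \<subseteq> (\<lambda>p. omp p) ` UNIV"
  proof
    fix z assume "z \<in> Lat"
    then obtain m n where "z = om w w' m n" by (auto simp: wlattice_iff)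
    hence "z = omp (m, n)" by simp
    thus "z \<in> range omp" by blast
  qed
  moreover have "countable (range omp)" by simp
  ultimately show ?thesis using countable_subset by blast
qed

lemma obtain_big:
  obtains K :: nat where "K \<noteq> 0" "R \<le> cc * real K"
proof -
  from eventually_big[of R] obtain N where "\<forall>n\<ge>N. n \<noteq> 0 \<and> R \<le> cc * real n"
    by (auto simp: eventually_at_top_linorder)
  thus ?thesis using that by blast
qed

lemma connected_compl_Lat: "connected (- Lat)"
  using path_connected_complement_countable[OF _ Lat_countable] path_connected_imp_connected
  by simp

lemma Lat_0: "0 \<in> Lat"
  using omp_in_Lat[of "(0,0)"] by (simp add: om_def)

lemma Lat_small:
  assumes "z \<in> Lat" "z \<noteq> 0"
  shows "norm z \<ge> 2 * cc"
proof -
  obtain m n where mn: "z = om w w' m n" using assms(1) by (auto simp: wlattice_iff)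
  define k where "k = nat (max \<bar>m\<bar> \<bar>n\<bar>)"
  have sh: "(m, n) \<in> shell k" unfolding k_def by (rule in_some_shell)
  have k0: "k \<noteq> 0"
  proof
    assume "k = 0"
    hence "shell k = {(0,0)}" by (simp add: shell_0)
    hence "m = 0" "n = 0" using sh by auto
    thus False using assms(2) mn by (simp add: om_def)
  qed
  have "norm z \<ge> 2 * cc * k" using om_shell_bound[OF k0 sh] mn by simp
  moreover have "2 * cc * k \<ge> 2 * cc * 1" using k0 cc_pos by (intro mult_left_mono) auto
  ultimately show ?thesis by simp
qed

lemma T_deriv':
  assumes "z \<notin> Lat"
  shows "(T k has_field_derivative T' k z) (at z)"
proof -
  have "((\<lambda>z. \<Sum>p\<in>shell k. tt p z) has_field_derivative (\<Sum>p\<in>shell k. tt' p z)) (at z)"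
  proof (rule DERIV_sum)
    fix p assume p: "p \<in> shell k"
    show "((\<lambda>z. tt p z) has_field_derivative tt' p z) (at z)"
    proof (cases "p = (0,0)")
      case True
      have "z \<noteq> 0" using assms Lat_0 by auto
      then show ?thesis using True unfolding tt_def tt'_def
        by (auto intro!: derivative_eq_intros simp: power2_eq_square field_simps)
    next
      case pnz: False
      have om0: "omp p \<noteq> 0" using pnz by (cases p) (auto simp: om_eq_0_iff)
      have zne: "z - omp p \<noteq> 0" using assms omp_in_Lat[of p] by auto
      show ?thesis
        unfolding tt_def tt'_def using pnz om0 zne
        by (auto intro!: derivative_eq_intros simp: power2_eq_square field_simps)
    qed
  qed
  thus ?thesis unfolding T_def[abs_def] T'_def .
qed

lemma wp_sums:
  assumes z: "z \<notin> Lat"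
  shows "(\<lambda>k. T' k z) sums (- wp w w' z)"
proof -
  define R where "R = norm z + 1"
  have R: "R > 0" by (simp add: R_def add_nonneg_pos)
  obtain K :: nat where K: "K \<noteq> 0" "R \<le> cc * K"
    by (rule obtain_big[of R])
  obtain g g' where gg: "\<And>y. y \<in> ball (0::complex) R \<Longrightarrow> (\<lambda>n. T (n + K) y) sums g y \<and>
      (\<lambda>n. T' (n + K) y) sums g' y \<and> (g has_field_derivative g' y) (at y)"
    using T_tail[OF R K] by blast
  define S where "S = ball 0 R \<inter> - Lat"
  have S: "open S" unfolding S_def by (intro open_Int open_ball open_compl_Lat)
  have zS: "z \<in> S" using z by (simp add: S_def R_def)
  have eq: "wzeta w w' y = (\<Sum>k<K. T k y) + g y" if "y \<in> S" for y
  proof -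
    have "(\<lambda>n. T (n + K) y) sums g y" using gg that by (auto simp: S_def)
    hence "(\<lambda>k. T k y) sums (g y + (\<Sum>k<K. T k y))" by (rule sums_iff_shift[THEN iffD1])
    moreover have "(\<lambda>k. T k y) sums wzeta w w' y" using that by (intro zeta_sums) (auto simp: S_def)
    ultimately show ?thesis using sums_unique2 by (metis add.commute)
  qed
  have d1: "((\<lambda>y. (\<Sum>k<K. T k y) + g y) has_field_derivative (\<Sum>k<K. T' k z) + g' z) (at z)"
    using zS gg[of z] z
    by (auto intro!: derivative_eq_intros DERIV_sum T_deriv' simp: S_def)
  have d2: "(wzeta w w' has_field_derivative (\<Sum>k<K. T' k z) + g' z) (at z)"
    by (rule has_field_derivative_transform_within_open[OF d1 S zS]) (use eq in auto)
  have "- wp w w' z = (\<Sum>k<K. T' k z) + g' z"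
    using DERIV_unique[OF zeta_deriv[OF z] d2] .
  moreover have "(\<lambda>n. T' (n + K) z) sums g' z" using gg zS by (auto simp: S_def)
  hence "(\<lambda>k. T' k z) sums (g' z + (\<Sum>k<K. T' k z))" by (rule sums_iff_shift[THEN iffD1])
  ultimately show ?thesis by (simp add: add.commute)
qed

lemma zeta_local:
  assumes S: "open S" "S \<subseteq> ball 0 R" "S \<inter> Lat \<subseteq> {0}" and R: "R > 0"
  shows "\<exists>G. G holomorphic_on S \<and> (\<forall>z\<in>S - {0}. wzeta w w' z = 1 / z + G z)"
proof -
  obtain K :: nat where K: "K \<noteq> 0" "R \<le> cc * K"
    by (rule obtain_big[of R])
  obtain g g' where gg: "\<And>y. y \<in> ball (0::complex) R \<Longrightarrow> (\<lambda>n. T (n + K) y) sums g y \<and>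
      (\<lambda>n. T' (n + K) y) sums g' y \<and> (g has_field_derivative g' y) (at y)"
    using T_tail[OF R K] by blast
  obtain K' where K': "K = Suc K'" using K by (cases K) auto
  define G where "G = (\<lambda>y. (\<Sum>k<K'. T (Suc k) y) + g y)"
  have "G holomorphic_on S"
  proof -
    have "\<exists>f'. (G has_field_derivative f') (at y)" if y: "y \<in> S" for y
    proof -
      have "(T (Suc k) has_field_derivative T' (Suc k) y) (at y)" for k
      proof (rule T_deriv)
        fix p assume p: "p \<in> shell (Suc k)"
        have pnz: "p \<noteq> (0,0)" using shell_nonzero[OF _ p] by simp
        have "omp p \<noteq> 0" using pnz by (cases p) (auto simp: om_eq_0_iff)
        thus "y \<noteq> omp p" using S(3) y omp_in_Lat[of p] by auto
      qed simp
      moreover have "(g has_field_derivative g' y) (at y)" using gg y S(2) by auto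
      ultimately have "((\<lambda>y. (\<Sum>k<K'. T (Suc k) y) + g y) has_field_derivative
          (\<Sum>k<K'. T' (Suc k) y) + g' y) (at y)"
        by (intro DERIV_add DERIV_sum) auto
      thus ?thesis unfolding G_def by blast
    qed
    thus ?thesis using S(1) by (simp add: holomorphic_on_open)
  qed
  moreover have "wzeta w w' z = 1 / z + G z" if z: "z \<in> S - {0}" for z
  proof -
    have zL: "z \<notin> Lat" using z S(3) by auto
    have "(\<lambda>n. T (n + K) z) sums g z" using gg z S(2) by auto
    hence "(\<lambda>k. T k z) sums (g z + (\<Sum>k<K. T k z))" by (rule sums_iff_shift[THEN iffD1])
    hence "wzeta w w' z = g z + (\<Sum>k<K. T k z)" using zeta_sums[OF zL] sums_unique2 by metis
    also have "(\<Sum>k<K. T k z) = T 0 z + (\<Sum>k<K'. T (Suc k) z)" unfolding K' by (rule sum.lessThan_Suc_shift)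
    also have "T 0 z = 1 / z" by (simp add: T_def shell_0 tt_def)
    finally show ?thesis by (simp add: G_def)
  qed
  ultimately show ?thesis by blast
qed

end



context wl
begin

definition AA :: "complex \<Rightarrow> int \<times> int \<Rightarrow> complex" where
  "AA z p = 1 / (z - omp p)^2"

definition BB :: "int \<times> int \<Rightarrow> complex" where
  "BB p = (if p = (0,0) then 0 else 1 / (omp p)^2)"

lemma tt'_AB: "- tt' p z = AA z p - BB p"
  by (cases "p = (0,0)") (auto simp: tt'_def AA_def BB_def om_def)

lemma wp_lim:
  assumes "z \<notin> Lat"
  shows "(\<lambda>N. \<Sum>p\<in>Sq N. AA z p - BB p) \<longlonglongrightarrow> wp w w' z"
proof -
  have "(\<lambda>n. \<Sum>k<n. T' k z) \<longlonglongrightarrow> - wp w w' z"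
    using wp_sums[OF assms] by (simp add: sums_def)
  hence "(\<lambda>n. \<Sum>k<Suc n. T' k z) \<longlonglongrightarrow> - wp w w' z"
    by (rule LIMSEQ_Suc)
  hence "(\<lambda>n. - (\<Sum>k<Suc n. T' k z)) \<longlonglongrightarrow> wp w w' z"
    using tendsto_minus by fastforce
  moreover have "- (\<Sum>k<Suc n. T' k z) = (\<Sum>p\<in>Sq n. AA z p - BB p)" for n
    unfolding T'_def sum_shells by (simp add: sum_negf[symmetric] tt'_AB)
  ultimately show ?thesis by simp
qed

lemma om_big_bound:
  assumes "\<bar>m\<bar> \<ge> int k \<or> \<bar>n\<bar> \<ge> int k"
  shows "norm (om w w' m n) \<ge> 2 * cc * k"
  using assms
proof
  assume h: "\<bar>m\<bar> \<ge> int k"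
  have "cc * k \<le> Re w * \<bar>of_int m\<bar>"
    using h cc_pos w_pos unfolding cc_def
    by (intro mult_mono) auto
  hence "2 * cc * k \<le> 2 * \<bar>of_int m\<bar> * Re w" by (simp add: mult.commute)
  also have "\<dots> = \<bar>Re (om w w' m n)\<bar>" using w_pos by (simp add: Re_om abs_mult)
  also have "\<dots> \<le> norm (om w w' m n)" by (rule abs_Re_le_cmod)
  finally show ?thesis .
next
  assume h: "\<bar>n\<bar> \<ge> int k"
  have "cc * k \<le> Im w' * \<bar>of_int n\<bar>"
    using h cc_pos w'_pos unfolding cc_def
    by (intro mult_mono) auto
  hence "2 * cc * k \<le> 2 * \<bar>of_int n\<bar> * Im w'" by (simp add: mult.commute)
  also have "\<dots> = \<bar>Im (om w w' m n)\<bar>" using w'_pos by (simp add: Im_om abs_mult)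
  also have "\<dots> \<le> norm (om w w' m n)" by (rule abs_Im_le_cmod)
  finally show ?thesis .
qed

lemma AA_bound:
  assumes "\<bar>fst p\<bar> \<ge> int N \<or> \<bar>snd p\<bar> \<ge> int N" "N \<noteq> 0" "norm z \<le> cc * N"
  shows "norm (AA z p) \<le> 1 / (cc * N)^2"
proof -
  have om: "norm (omp p) \<ge> 2 * cc * N" using om_big_bound[of N "fst p" "snd p"] assms(1) by simp
  have "norm (z - omp p) \<ge> norm (omp p) - norm z"
    using norm_triangle_ineq2[of "omp p" z] by (simp add: norm_minus_commute)
  hence zo: "norm (z - omp p) \<ge> cc * N" using om assms(3) by simp
  have pos: "cc * N > 0" using cc_pos assms(2) by simp
  have "norm (AA z p) = 1 / norm (z - omp p) ^ 2" by (simp add: AA_def norm_divide norm_power)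
  also have "\<dots> \<le> 1 / (cc * N) ^ 2"
  proof -
    have "(cc * N)^2 \<le> norm (z - omp p) ^ 2" using zo pos by (intro power_mono) auto
    moreover have "(cc * N)^2 > 0" using pos by (simp only: zero_less_power)
    ultimately show ?thesis by (intro frac_le) auto
  qed
  finally show ?thesis .
qed

lemma sum_big_bound:
  assumes "finite C" "card C \<le> 2 * N + 1" "\<And>p. p \<in> C \<Longrightarrow> \<bar>fst p\<bar> \<ge> int N \<or> \<bar>snd p\<bar> \<ge> int N"
    "N \<noteq> 0" "norm z \<le> cc * N"
  shows "norm (\<Sum>p\<in>C. AA z p) \<le> real (2 * N + 1) / (cc * N)^2"
proof -
  have "norm (\<Sum>p\<in>C. AA z p) \<le> (\<Sum>p\<in>C. norm (AA z p))" by (rule norm_sum)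
  also have "\<dots> \<le> of_nat (card C) * (1 / (cc * N)^2)"
    by (rule sum_bounded_above) (use AA_bound assms in auto)
  also have "\<dots> \<le> of_nat (2 * N + 1) * (1 / (cc * N)^2)"
    by (intro mult_right_mono) (use assms(2) in auto)
  finally show ?thesis by (simp only: times_divide_eq_right mult.right_neutral)
qed

lemma shift_diff_bound:
  assumes inj: "inj_on f (Sq N)" and CA: "f ` Sq N - Sq N \<subseteq> CA" and CB: "Sq N - f ` Sq N \<subseteq> CB"
    and fin: "finite CA" "finite CB" and card: "card CA \<le> 2 * N + 1" "card CB \<le> 2 * N + 1"
    and big: "\<And>p. p \<in> CA \<union> CB \<Longrightarrow> \<bar>fst p\<bar> \<ge> int N \<or> \<bar>snd p\<bar> \<ge> int N"
    and N: "N \<noteq> 0" "norm z \<le> cc * N"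
  shows "norm ((\<Sum>p\<in>Sq N. AA z (f p)) - (\<Sum>p\<in>Sq N. AA z p)) \<le> 2 * real (2 * N + 1) / (cc * N)^2"
proof -
  define X where "X = f ` Sq N"
  define Y where "Y = Sq N"
  have fX: "finite X" "finite Y" by (simp_all add: X_def Y_def)
  have "(\<Sum>p\<in>Sq N. AA z (f p)) = (\<Sum>p\<in>X. AA z p)"
    unfolding X_def using sum.reindex[OF inj, of "AA z"] by (simp add: o_def)
  also have "\<dots> = (\<Sum>p\<in>X \<inter> Y. AA z p) + (\<Sum>p\<in>X - Y. AA z p)"
    by (rule sum.Int_Diff[OF fX(1)])
  finally have 1: "(\<Sum>p\<in>Sq N. AA z (f p)) = (\<Sum>p\<in>X \<inter> Y. AA z p) + (\<Sum>p\<in>X - Y. AA z p)" .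
  have "(\<Sum>p\<in>Sq N. AA z p) = (\<Sum>p\<in>Y \<inter> X. AA z p) + (\<Sum>p\<in>Y - X. AA z p)"
    unfolding Y_def[symmetric] by (rule sum.Int_Diff[OF fX(2)])
  hence 2: "(\<Sum>p\<in>Sq N. AA z p) = (\<Sum>p\<in>X \<inter> Y. AA z p) + (\<Sum>p\<in>Y - X. AA z p)"
    by (simp add: Int_commute)
  have "norm ((\<Sum>p\<in>Sq N. AA z (f p)) - (\<Sum>p\<in>Sq N. AA z p))
        = norm ((\<Sum>p\<in>X - Y. AA z p) - (\<Sum>p\<in>Y - X. AA z p))" unfolding 1 2 by simp
  also have "\<dots> \<le> norm (\<Sum>p\<in>X - Y. AA z p) + norm (\<Sum>p\<in>Y - X. AA z p)"
    by (rule norm_triangle_ineq4)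
  also have "norm (\<Sum>p\<in>X - Y. AA z p) \<le> real (2 * N + 1) / (cc * N)^2"
  proof (rule sum_big_bound)
    have "X - Y \<subseteq> CA" using CA by (simp add: X_def Y_def)
    thus "card (X - Y) \<le> 2 * N + 1" using card_mono[OF fin(1)] card(1) by (meson le_trans)
    show "finite (X - Y)" using fX by simp
    show "\<bar>fst p\<bar> \<ge> int N \<or> \<bar>snd p\<bar> \<ge> int N" if "p \<in> X - Y" for p
      using big[of p] that CA by (auto simp: X_def Y_def)
  qed (use N in auto)
  also have "norm (\<Sum>p\<in>Y - X. AA z p) \<le> real (2 * N + 1) / (cc * N)^2"
  proof (rule sum_big_bound)
    have "Y - X \<subseteq> CB" using CB by (simp add: X_def Y_def)
    thus "card (Y - X) \<le> 2 * N + 1" using card_mono[OF fin(2)] card(2) by (meson le_trans)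
    show "finite (Y - X)" using fX by simp
    show "\<bar>fst p\<bar> \<ge> int N \<or> \<bar>snd p\<bar> \<ge> int N" if "p \<in> Y - X" for p
      using big[of p] that CB by (auto simp: X_def Y_def)
  qed (use N in auto)
  finally show ?thesis by (simp add: add_divide_distrib[symmetric])
qed

lemma wp_periodic_gen:
  assumes z: "z \<notin> Lat" "z + P \<notin> Lat"
    and bound: "eventually (\<lambda>N. norm ((\<Sum>p\<in>Sq N. AA (z + P) p) - (\<Sum>p\<in>Sq N. AA z p))
         \<le> 6 / (cc^2 * real N)) sequentially"
  shows "wp w w' (z + P) = wp w w' z"
proof -
  have l1: "(\<lambda>N. (\<Sum>p\<in>Sq N. AA (z + P) p - BB p) - (\<Sum>p\<in>Sq N. AA z p - BB p))
      \<longlonglongrightarrow> wp w w' (z + P) - wp w w' z"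
    by (intro tendsto_diff wp_lim z)
  have eq: "(\<Sum>p\<in>Sq N. AA (z + P) p - BB p) - (\<Sum>p\<in>Sq N. AA z p - BB p)
      = (\<Sum>p\<in>Sq N. AA (z + P) p) - (\<Sum>p\<in>Sq N. AA z p)" for N
    by (simp add: sum_subtractf)
  have l0: "(\<lambda>N. 6 / (cc^2 * real N)) \<longlonglongrightarrow> 0"
  proof -
    have "(\<lambda>N. (6 / cc^2) / real N) \<longlonglongrightarrow> 0" by (rule lim_const_over_n)
    thus ?thesis by simp
  qed
  have "(\<lambda>N. (\<Sum>p\<in>Sq N. AA (z + P) p) - (\<Sum>p\<in>Sq N. AA z p)) \<longlonglongrightarrow> 0"
    by (rule Lim_null_comparison[OF bound l0])
  hence "wp w w' (z + P) - wp w w' z = 0"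
    using l1 unfolding eq using LIMSEQ_unique by blast
  thus ?thesis by simp
qed

lemma bound_aux:
  assumes "N \<noteq> 0"
  shows "2 * real (2 * N + 1) / (cc * N)^2 \<le> 6 / (cc^2 * real N)"
proof -
  have N1: "real N \<ge> 1" using assms by simp
  have "2 * real (2 * N + 1) / (cc * N)^2 = (2 * (2 * real N + 1) / real N) / (cc^2 * real N)"
    using N1 cc_pos by (simp add: field_simps power2_eq_square)
  also have "\<dots> \<le> 6 / (cc^2 * real N)"
  proof (intro divide_right_mono)
    show "2 * (2 * real N + 1) / real N \<le> 6" using N1 by (simp add: field_simps)
  qed (use cc_pos N1 in auto)
  finally show ?thesis .
qed

lemma card_col: "card ({a} \<times> {- int N..int N}) \<le> 2 * N + 1"
  by (simp add: card_cartesian_product)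

lemma card_row: "card ({- int N..int N} \<times> {a}) \<le> 2 * N + 1"
  by (simp add: card_cartesian_product)

lemma eventually_zN: "eventually (\<lambda>N. N \<noteq> 0 \<and> norm z \<le> cc * real N) sequentially"
  by (rule eventually_big)

lemma wp_per1:
  assumes "z \<notin> Lat" "z + 2 * w \<notin> Lat"
  shows "wp w w' (z + 2 * w) = wp w w' z"
proof (rule wp_periodic_gen[OF assms])
  define f where "f = (\<lambda>p::int \<times> int. (fst p - 1, snd p))"
  have AA_sh: "AA (z + 2 * w) p = AA z (f p)" for p
    by (simp add: AA_def f_def om_def algebra_simps)
  show "\<forall>\<^sub>F N in sequentially. norm ((\<Sum>p\<in>Sq N. AA (z + 2 * w) p) - (\<Sum>p\<in>Sq N. AA z p)) \<le> 6 / (cc^2 * real N)"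
    using eventually_zN[of z]
  proof eventually_elim
    case (elim N)
    have "norm ((\<Sum>p\<in>Sq N. AA z (f p)) - (\<Sum>p\<in>Sq N. AA z p)) \<le> 2 * real (2 * N + 1) / (cc * N)^2"
    proof (rule shift_diff_bound[where CA = "{- int N - 1} \<times> {- int N..int N}" and CB = "{int N} \<times> {- int N..int N}"])
      show "inj_on f (Sq N)" by (auto simp: inj_on_def f_def)
      show "f ` Sq N - Sq N \<subseteq> {- int N - 1} \<times> {- int N..int N}"
        by (auto simp: f_def Sq_def)
      show "Sq N - f ` Sq N \<subseteq> {int N} \<times> {- int N..int N}"
      proof
        fix p assume p: "p \<in> Sq N - f ` Sq N"
        obtain m n where pm: "p = (m, n)" by (cases p)
        have "(m + 1, n) \<notin> Sq N"
        proof
          assume "(m + 1, n) \<in> Sq N"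
          hence "f (m + 1, n) \<in> f ` Sq N" by blast
          thus False using p pm by (simp add: f_def)
        qed
        thus "p \<in> {int N} \<times> {- int N..int N}" using p pm by (auto simp: Sq_def)
      qed
    qed (use elim card_col in auto)
    thus ?case unfolding AA_sh using bound_aux[of N] elim by simp
  qed
qed

lemma wp_per2:
  assumes "z \<notin> Lat" "z + 2 * w' \<notin> Lat"
  shows "wp w w' (z + 2 * w') = wp w w' z"
proof (rule wp_periodic_gen[OF assms])
  define f where "f = (\<lambda>p::int \<times> int. (fst p, snd p - 1))"
  have AA_sh: "AA (z + 2 * w') p = AA z (f p)" for p
    by (simp add: AA_def f_def om_def algebra_simps)
  show "\<forall>\<^sub>F N in sequentially. norm ((\<Sum>p\<in>Sq N. AA (z + 2 * w') p) - (\<Sum>p\<in>Sq N. AA z p)) \<le> 6 / (cc^2 * real N)"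
    using eventually_zN[of z]
  proof eventually_elim
    case (elim N)
    have "norm ((\<Sum>p\<in>Sq N. AA z (f p)) - (\<Sum>p\<in>Sq N. AA z p)) \<le> 2 * real (2 * N + 1) / (cc * N)^2"
    proof (rule shift_diff_bound[where CA = "{- int N..int N} \<times> {- int N - 1}" and CB = "{- int N..int N} \<times> {int N}"])
      show "inj_on f (Sq N)" by (auto simp: inj_on_def f_def)
      show "f ` Sq N - Sq N \<subseteq> {- int N..int N} \<times> {- int N - 1}"
        by (auto simp: f_def Sq_def)
      show "Sq N - f ` Sq N \<subseteq> {- int N..int N} \<times> {int N}"
      proof
        fix p assume p: "p \<in> Sq N - f ` Sq N"
        obtain m n where pm: "p = (m, n)" by (cases p)
        have "(m, n + 1) \<notin> Sq N"
        proof
          assume "(m, n + 1) \<in> Sq N"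
          hence "f (m, n + 1) \<in> f ` Sq N" by blast
          thus False using p pm by (simp add: f_def)
        qed
        thus "p \<in> {- int N..int N} \<times> {int N}" using p pm by (auto simp: Sq_def)
      qed
    qed (use elim card_row in auto)
    thus ?case unfolding AA_sh using bound_aux[of N] elim by simp
  qed
qed

end



lemma deriv_sym_lemma:
  fixes f :: "complex \<Rightarrow> complex"
  assumes "(f has_field_derivative D) (at z)" "(g has_field_derivative E) (at z)" "f = g"
  shows "D = E"
  using assms DERIV_unique by blast

context wl
begin

lemma Lat_uminus: "- z \<in> Lat \<longleftrightarrow> z \<in> Lat"
proof -
  have "- om w w' m n = om w w' (- m) (- n)" for m n by (simp add: om_def)
  hence "z \<in> Lat \<Longrightarrow> - z \<in> Lat" for z by (auto simp: wlattice_iff)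
  thus ?thesis by (metis minus_minus)
qed

lemma cnj_w: "cnj w = w" using w_real by (simp add: complex_eq_iff)
lemma cnj_w': "cnj w' = - w'" using w'_imag by (simp add: complex_eq_iff)

lemma cnj_om: "cnj (om w w' m n) = om w w' m (- n)"
  by (simp add: om_def cnj_w cnj_w')

lemma Lat_cnj: "cnj z \<in> Lat \<longleftrightarrow> z \<in> Lat"
proof -
  have "z \<in> Lat \<Longrightarrow> cnj z \<in> Lat" for z
  proof -
    assume "z \<in> Lat"
    then obtain m n where "z = om w w' m n" by (auto simp: wlattice_iff)
    hence "cnj z = om w w' m (- n)" by (simp add: cnj_om)
    thus "cnj z \<in> Lat" by (auto simp: wlattice_iff)
  qed
  thus ?thesis by (metis complex_cnj_cnj)
qed

lemma Lat_add: "z + om w w' m n \<in> Lat \<longleftrightarrow> z \<in> Lat"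
proof -
  have "om w w' a b + om w w' m n = om w w' (a + m) (b + n)" for a b by (simp add: om_def algebra_simps)
  moreover have "om w w' a b - om w w' m n = om w w' (a - m) (b - n)" for a b by (simp add: om_def algebra_simps)
  ultimately show ?thesis unfolding wlattice_iff by (metis add_diff_cancel)
qed

lemma Lat_add_2w: "z + 2 * w \<in> Lat \<longleftrightarrow> z \<in> Lat"
  using Lat_add[of z 1 0] by (simp add: om_def)

lemma Lat_add_2w': "z + 2 * w' \<in> Lat \<longleftrightarrow> z \<in> Lat"
  using Lat_add[of z 0 1] by (simp add: om_def)

lemma SFprod: "(\<Prod>k<Suc N. SF k z) = (\<Prod>p\<in>Sq N. sg p z)"
  unfolding SF_def by (rule prod_shells)

lemma Sq_neg: "p \<in> Sq N \<Longrightarrow> (- fst p, - snd p) \<in> Sq N"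
  by (auto simp: Sq_def)

lemma Sq_cnj: "p \<in> Sq N \<Longrightarrow> (fst p, - snd p) \<in> Sq N"
  by (auto simp: Sq_def)

lemma sigma_odd: "wsigma w w' (- z) = - wsigma w w' z"
proof -
  define ng where "ng = (\<lambda>p::int\<times>int. (- fst p, - snd p))"
  have sgn: "sg p (- z) = sg (ng p) z" if "p \<noteq> (0,0)" for p
  proof -
    have "ng p \<noteq> (0,0)" using that by (cases p) (auto simp: ng_def)
    moreover have "om w w' (fst (ng p)) (snd (ng p)) = - om w w' (fst p) (snd p)"
      by (simp add: ng_def om_def)
    ultimately show ?thesis using that by (simp add: sg_def)
  qed
  have bij: "bij_betw ng (Sq N - {(0,0)}) (Sq N - {(0,0)})" for N
    by (rule bij_betwI[where g = ng]) (auto simp: ng_def Sq_def)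
  have eq: "(\<Prod>k<Suc N. SF k (- z)) = - (\<Prod>k<Suc N. SF k z)" for N
  proof -
    have z0: "(0::int, 0::int) \<in> Sq N" by (simp add: Sq_def)
    have "(\<Prod>k<Suc N. SF k (- z)) = sg (0,0) (- z) * (\<Prod>p\<in>Sq N - {(0,0)}. sg p (- z))"
      unfolding SFprod by (rule prod.remove[OF finite_Sq z0])
    also have "(\<Prod>p\<in>Sq N - {(0,0)}. sg p (- z)) = (\<Prod>p\<in>Sq N - {(0,0)}. sg (ng p) z)"
      by (intro prod.cong refl sgn) auto
    also have "\<dots> = (\<Prod>p\<in>Sq N - {(0,0)}. sg p z)"
      by (rule prod.reindex_bij_betw[OF bij])
    also have "sg (0,0) (- z) = - sg (0,0) z" by (simp add: sg_def)
    also have "- sg (0,0) z * (\<Prod>p\<in>Sq N - {(0,0)}. sg p z) = - (sg (0,0) z * (\<Prod>p\<in>Sq N - {(0,0)}. sg p z))"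
      by simp
    also have "sg (0,0) z * (\<Prod>p\<in>Sq N - {(0,0)}. sg p z) = (\<Prod>k<Suc N. SF k z)"
      unfolding SFprod by (rule prod.remove[OF finite_Sq z0, symmetric])
    finally show ?thesis .
  qed
  have "(\<lambda>N. \<Prod>k<Suc N. SF k (- z)) \<longlonglongrightarrow> - wsigma w w' z"
    unfolding eq by (intro tendsto_minus SF_lim)
  thus ?thesis using SF_lim[of "- z"] LIMSEQ_unique by blast
qed

lemma sigma_cnj: "wsigma w w' (cnj z) = cnj (wsigma w w' z)"
proof -
  define cg where "cg = (\<lambda>p::int\<times>int. (fst p, - snd p))"
  have sgc: "sg p (cnj z) = cnj (sg (cg p) z)" for p
  proof (cases "p = (0,0)")
    case False
    have "cg p \<noteq> (0,0)" using False by (cases p) (auto simp: cg_def)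
    moreover have "om w w' (fst (cg p)) (snd (cg p)) = cnj (om w w' (fst p) (snd p))"
      by (simp add: cg_def cnj_om)
    ultimately have "sg (cg p) z = weierstrass_factor 2 (z / cnj (omp p))"
      by (simp add: sg_def)
    hence "cnj (sg (cg p) z) = weierstrass_factor 2 (cnj z / omp p)"
      by (simp add: wf2 exp_cnj)
    thus ?thesis using False by (simp add: sg_def)
  qed (simp add: sg_def cg_def)
  have bij: "bij_betw cg (Sq N) (Sq N)" for N
    by (rule bij_betwI[where g = cg]) (auto simp: cg_def Sq_def)
  have eq: "(\<Prod>k<Suc N. SF k (cnj z)) = cnj (\<Prod>k<Suc N. SF k z)" for N
  proof -
    have "(\<Prod>k<Suc N. SF k (cnj z)) = (\<Prod>p\<in>Sq N. cnj (sg (cg p) z))"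
      unfolding SFprod by (intro prod.cong refl sgc)
    also have "\<dots> = cnj (\<Prod>p\<in>Sq N. sg (cg p) z)" by (simp add: cnj_prod)
    also have "(\<Prod>p\<in>Sq N. sg (cg p) z) = (\<Prod>p\<in>Sq N. sg p z)"
      by (rule prod.reindex_bij_betw[OF bij])
    finally show ?thesis unfolding SFprod .
  qed
  have "(\<lambda>N. \<Prod>k<Suc N. SF k (cnj z)) \<longlonglongrightarrow> cnj (wsigma w w' z)"
    unfolding eq by (intro tendsto_cnj SF_lim)
  thus ?thesis using SF_lim[of "cnj z"] LIMSEQ_unique by blast
qed

lemma deriv_odd:
  fixes f :: "complex \<Rightarrow> complex"
  assumes odd: "\<And>z. f (- z) = - f z"
    and d1: "(f has_field_derivative D1) (at z)" and d2: "(f has_field_derivative D2) (at (- z))"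
  shows "D1 = D2"
proof -
  have m: "((\<lambda>x. - x) has_field_derivative - 1) (at z)" by (auto intro!: derivative_eq_intros)
  have "((\<lambda>x. f (- x)) has_field_derivative D2 * (- 1)) (at z)"
    by (rule DERIV_chain'[OF m]) (simp add: d2)
  hence "((\<lambda>x. - f (- x)) has_field_derivative - (D2 * (- 1))) (at z)"
    by (rule DERIV_minus)
  moreover have "(\<lambda>x. - f (- x)) = f" using odd by (simp add: fun_eq_iff)
  ultimately have "(f has_field_derivative D2) (at z)" by simp
  thus ?thesis using d1 DERIV_unique by blast
qed

lemma deriv_even_conj:
  fixes f :: "complex \<Rightarrow> complex"
  assumes sym: "\<And>z. f (cnj z) = cnj (f z)"
    and d1: "(f has_field_derivative D1) (at z)" and d2: "(f has_field_derivative D2) (at (cnj z))"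
  shows "D2 = cnj D1"
proof -
  have "((cnj \<circ> f \<circ> cnj) has_field_derivative cnj D2) (at z)"
    by (rule has_field_derivative_cnj_cnj) (use d2 in simp)
  moreover have "cnj \<circ> f \<circ> cnj = f" using sym by (simp add: fun_eq_iff)
  ultimately have "(f has_field_derivative cnj D2) (at z)" by simp
  hence "cnj D2 = D1" using d1 DERIV_unique by blast
  thus ?thesis by auto
qed

lemma dsigma_even: "deriv (wsigma w w') (- z) = deriv (wsigma w w') z"
  using deriv_odd[OF sigma_odd sigma_deriv[of z] sigma_deriv[of "- z"]] by simp

lemma dsigma_cnj: "deriv (wsigma w w') (cnj z) = cnj (deriv (wsigma w w') z)"
  by (rule deriv_even_conj[OF sigma_cnj sigma_deriv sigma_deriv])

lemma zeta_odd: "wzeta w w' (- z) = - wzeta w w' z"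
  by (simp add: wzeta_def dsigma_even sigma_odd)

lemma zeta_cnj: "wzeta w w' (cnj z) = cnj (wzeta w w' z)"
  by (simp add: wzeta_def dsigma_cnj sigma_cnj)

lemma wp_even: "z \<notin> Lat \<Longrightarrow> wp w w' (- z) = wp w w' z"
proof -
  assume z: "z \<notin> Lat"
  have "- wp w w' z = - wp w w' (- z)"
    by (rule deriv_odd[OF zeta_odd zeta_deriv[OF z] zeta_deriv]) (use z Lat_uminus in auto)
  thus ?thesis by simp
qed

lemma wp_cnj: "z \<notin> Lat \<Longrightarrow> wp w w' (cnj z) = cnj (wp w w' z)"
proof -
  assume z: "z \<notin> Lat"
  have "- wp w w' (cnj z) = cnj (- wp w w' z)"
    by (rule deriv_even_conj[OF zeta_cnj zeta_deriv[OF z] zeta_deriv]) (use z Lat_cnj in auto)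
  thus ?thesis by simp
qed

lemma sigma_deriv_eq: "z \<notin> Lat \<Longrightarrow> deriv (wsigma w w') z = wsigma w w' z * wzeta w w' z"
  by (simp add: wzeta_def sigma_zero_iff)

lemma quasi:
  assumes PL: "\<And>z. z + P \<in> Lat \<longleftrightarrow> z \<in> Lat" and P2: "P / 2 \<notin> Lat"
    and per: "\<And>z. z \<notin> Lat \<Longrightarrow> wp w w' (z + P) = wp w w' z"
  shows "\<And>z. z \<notin> Lat \<Longrightarrow> wzeta w w' (z + P) = wzeta w w' z + 2 * wzeta w w' (P / 2)"
    and "\<And>z. wsigma w w' (z + P) = - exp (2 * wzeta w w' (P / 2) * (z + P / 2)) * wsigma w w' z"
proof -
  define \<eta> where "\<eta> = wzeta w w' (P / 2)"
  have mP2: "- (P / 2) \<notin> Lat" using P2 Lat_uminus by simp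
  have S: "connected (- Lat)" "open (- Lat)" by (simp_all add: connected_compl_Lat open_compl_Lat)
  have zc: "continuous_on (- Lat) (wzeta w w')"
    by (rule holomorphic_on_imp_continuous_on[OF zeta_holo])
  have hc: "continuous_on (- Lat) (\<lambda>z. wzeta w w' (z + P) - wzeta w w' z)"
  proof -
    have "continuous_on (- Lat) (wzeta w w' \<circ> (\<lambda>z. z + P))"
      by (rule continuous_on_compose[OF _ continuous_on_subset[OF zc]]) (auto intro!: continuous_intros simp: PL)
    thus ?thesis by (intro continuous_on_diff zc) (simp add: o_def)
  qed
  obtain c where c: "\<And>z. z \<in> - Lat \<Longrightarrow> wzeta w w' (z + P) - wzeta w w' z = c"
  proof (rule DERIV_zero_connected_constant[OF S finite.emptyI hc])
    show "\<forall>x\<in>- Lat - {}. ((\<lambda>z. wzeta w w' (z + P) - wzeta w w' z) has_field_derivative 0) (at x)"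
    proof
      fix x assume x: "x \<in> - Lat - {}"
      have xP: "x + P \<notin> Lat" using x PL by auto
      have a: "((\<lambda>z. wzeta w w' (z + P)) has_field_derivative (- wp w w' (x + P)) * 1) (at x)"
        by (rule DERIV_chain'[of "\<lambda>z. z + P" 1 x UNIV "wzeta w w'"])
           (auto intro!: derivative_eq_intros zeta_deriv xP)
      have "((\<lambda>z. wzeta w w' (z + P) - wzeta w w' z) has_field_derivative
              (- wp w w' (x + P)) * 1 - (- wp w w' x)) (at x)"
        by (rule DERIV_diff[OF a zeta_deriv]) (use x in auto)
      thus "((\<lambda>z. wzeta w w' (z + P) - wzeta w w' z) has_field_derivative 0) (at x)"
        using per[of x] x by simp
    qed
  qed blast
  have cval: "c = 2 * \<eta>"
  proof -
    have "c = wzeta w w' (- (P / 2) + P) - wzeta w w' (- (P / 2))" using c[of "- (P / 2)"] mP2 by simp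
    also have "- (P / 2) + P = P / 2" by simp
    finally show ?thesis by (simp add: zeta_odd \<eta>_def)
  qed
  show zq: "wzeta w w' (z + P) = wzeta w w' z + 2 * wzeta w w' (P / 2)" if "z \<notin> Lat" for z
    using c[of z] that cval by (simp add: \<eta>_def algebra_simps)
  define F where "F = (\<lambda>z. wsigma w w' (z + P) * exp (- 2 * \<eta> * z))"
  define Q where "Q = (\<lambda>z. F z / wsigma w w' z)"
  have Qc: "continuous_on (- Lat) Q"
    unfolding Q_def F_def
    by (intro continuous_intros holomorphic_on_imp_continuous_on[OF sigma_holo]
        continuous_on_compose2[OF holomorphic_on_imp_continuous_on[OF sigma_holo[of UNIV]]])
       (auto simp: sigma_zero_iff)
  obtain d where d: "\<And>z. z \<in> - Lat \<Longrightarrow> Q z = d"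
  proof (rule DERIV_zero_connected_constant[OF S finite.emptyI Qc])
    show "\<forall>x\<in>- Lat - {}. (Q has_field_derivative 0) (at x)"
    proof
      fix x assume x: "x \<in> - Lat - {}"
      have xL: "x \<notin> Lat" using x by simp
      have xP: "x + P \<notin> Lat" using x PL by auto
      have s0: "wsigma w w' x \<noteq> 0" using xL sigma_zero_iff by simp
      have dF: "(F has_field_derivative (deriv (wsigma w w') (x + P) * 1 * exp (- 2 * \<eta> * x) +
               wsigma w w' (x + P) * (exp (- 2 * \<eta> * x) * (- 2 * \<eta>)))) (at x)"
      proof -
        have a: "((\<lambda>z. wsigma w w' (z + P)) has_field_derivative deriv (wsigma w w') (x + P) * 1) (at x)"
          by (rule DERIV_chain'[of "\<lambda>z. z + P" 1 x UNIV "wsigma w w'"])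
             (auto intro!: derivative_eq_intros sigma_deriv)
        have b: "((\<lambda>z. exp (- 2 * \<eta> * z)) has_field_derivative exp (- 2 * \<eta> * x) * (- 2 * \<eta>)) (at x)"
          by (auto intro!: derivative_eq_intros)
        show ?thesis using DERIV_mult[OF a b] unfolding F_def by (simp add: algebra_simps)
      qed
      have "(Q has_field_derivative
              ((deriv (wsigma w w') (x + P) * 1 * exp (- 2 * \<eta> * x) +
               wsigma w w' (x + P) * (exp (- 2 * \<eta> * x) * (- 2 * \<eta>))) * wsigma w w' x -
               F x * deriv (wsigma w w') x) / (wsigma w w' x * wsigma w w' x)) (at x)"
        unfolding Q_def by (rule DERIV_divide[OF dF sigma_deriv s0])
      moreover have "(deriv (wsigma w w') (x + P) * 1 * exp (- 2 * \<eta> * x) +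
               wsigma w w' (x + P) * (exp (- 2 * \<eta> * x) * (- 2 * \<eta>))) * wsigma w w' x -
               F x * deriv (wsigma w w') x = 0"
        unfolding F_def sigma_deriv_eq[OF xL] sigma_deriv_eq[OF xP] zq[OF xL]
        by (simp add: \<eta>_def algebra_simps)
      ultimately show "(Q has_field_derivative 0) (at x)" by simp
    qed
  qed blast
  have dval: "d = - exp (\<eta> * P)"
  proof -
    have s0: "wsigma w w' (P / 2) \<noteq> 0" using P2 sigma_zero_iff by simp
    have "d = Q (- (P / 2))" using d[of "- (P / 2)"] mP2 by simp
    also have "\<dots> = wsigma w w' (P / 2) * exp (\<eta> * P) / (- wsigma w w' (P / 2))"
      by (simp add: Q_def F_def sigma_odd[of "P / 2", symmetric] algebra_simps)
    also have "\<dots> = - exp (\<eta> * P)" using s0 by (simp add: field_simps)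
    finally show ?thesis .
  qed
  show "wsigma w w' (z + P) = - exp (2 * wzeta w w' (P / 2) * (z + P / 2)) * wsigma w w' z" for z
  proof (cases "z \<in> Lat")
    case True
    hence "wsigma w w' z = 0" "wsigma w w' (z + P) = 0" using PL[of z] sigma_zero_iff by auto
    then show ?thesis by simp
  next
    case False
    have s0: "wsigma w w' z \<noteq> 0" using False sigma_zero_iff by simp
    have "F z = - exp (\<eta> * P) * wsigma w w' z"
      using d[of z] False dval s0 by (simp add: Q_def field_simps)
    hence "wsigma w w' (z + P) = - exp (\<eta> * P) * wsigma w w' z * exp (2 * \<eta> * z)"
      unfolding F_def by (simp add: exp_minus field_simps)
    also have "\<dots> = - exp (2 * \<eta> * (z + P / 2)) * wsigma w w' z"
      by (simp add: exp_add[symmetric] algebra_simps)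
    finally show ?thesis by (simp add: \<eta>_def)
  qed
qed

end



lemma hci_shift:
  assumes "((\<lambda>z. f (z + d)) has_contour_integral i) (linepath p q)"
  shows "(f has_contour_integral i) (linepath (p + d) (q + d))"
proof -
  have lp: "linepath (p + d) (q + d) x = linepath p q x + d" for x
    by (simp add: linepath_def algebra_simps scaleR_conv_of_real)
  show ?thesis using assms unfolding has_contour_integral_linepath lp by simp
qed

lemma seg_Im_const:
  assumes "z \<in> closed_segment p q" "Im p = c" "Im q = c"
  shows "Im z = c"
proof -
  obtain u where u: "z = (1 - u) *\<^sub>R p + u *\<^sub>R q" using assms(1) by (auto simp: closed_segment_def)
  show ?thesis using assms(2,3) unfolding u by (simp add: algebra_simps)
qed

lemma seg_Re_const:
  assumes "z \<in> closed_segment p q" "Re p = c" "Re q = c"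
  shows "Re z = c"
proof -
  obtain u where u: "z = (1 - u) *\<^sub>R p + u *\<^sub>R q" using assms(1) by (auto simp: closed_segment_def)
  show ?thesis using assms(2,3) unfolding u by (simp add: algebra_simps)
qed

lemma not_even_1: "(1::real) \<noteq> 2 * of_int m"
proof
  assume "(1::real) = 2 * of_int m"
  hence "(of_int 1 :: real) = of_int (2 * m)" by simp
  hence "1 = 2 * m" by (simp only: of_int_eq_iff)
  thus False by presburger
qed

lemma not_even_m1: "(-1::real) \<noteq> 2 * of_int m"
  using not_even_1[of "- m"] by auto

lemma not_even_open: "0 < (t::real) \<Longrightarrow> t < 2 \<Longrightarrow> t \<noteq> 2 * of_int m"
proof
  assume t: "0 < t" "t < 2" "t = 2 * of_int m"
  hence "0 < m" "m < 1" by simp_all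
  thus False by simp
qed

context wl
begin

lemma w_eq: "w = Complex (Re w) 0" using w_real by (simp add: complex_eq_iff)
lemma w'_eq: "w' = Complex 0 (Im w')" using w'_imag by (simp add: complex_eq_iff)

lemma notLat_ReI:
  assumes "Re z = t * Re w" "\<And>m::int. t \<noteq> 2 * of_int m"
  shows "z \<notin> Lat"
proof
  assume "z \<in> Lat"
  then obtain m n where mn: "z = om w w' m n" by (auto simp: wlattice_iff)
  have e1: "Re z = 2 * of_int m * Re w" using mn by (simp add: Re_om)
  have "t = 2 * of_int m" using e1 assms(1) w_pos by (metis less_irrefl mult_cancel_right)
  with assms(2)[of m] show False by simp
qed

lemma notLat_ImI:
  assumes "Im z = t * Im w'" "\<And>m::int. t \<noteq> 2 * of_int m"
  shows "z \<notin> Lat"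
proof
  assume "z \<in> Lat"
  then obtain m n where mn: "z = om w w' m n" by (auto simp: wlattice_iff)
  have e1: "Im z = 2 * of_int n * Im w'" using mn by (simp add: Im_om)
  have "t = 2 * of_int n" using e1 assms(1) w'_pos by (metis less_irrefl mult_cancel_right)
  with assms(2)[of n] show False by simp
qed

lemma w_notLat: "w \<notin> Lat"
  by (rule notLat_ReI[of _ 1]) (auto simp: not_even_1)

lemma w'_notLat: "w' \<notin> Lat"
  by (rule notLat_ImI[of _ 1]) (auto simp: not_even_1 w_real)

lemma zeta_q1: "z \<notin> Lat \<Longrightarrow> wzeta w w' (z + 2 * w) = wzeta w w' z + 2 * wzeta w w' w"
  using quasi(1)[of "2 * w", OF Lat_add_2w _ wp_per1] w_notLat Lat_add_2w by auto

lemma zeta_q2: "z \<notin> Lat \<Longrightarrow> wzeta w w' (z + 2 * w') = wzeta w w' z + 2 * wzeta w w' w'"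
  using quasi(1)[of "2 * w'", OF Lat_add_2w' _ wp_per2] w'_notLat Lat_add_2w' by auto

lemma sigma_q1: "wsigma w w' (z + 2 * w) = - exp (2 * wzeta w w' w * (z + w)) * wsigma w w' z"
  using quasi(2)[of "2 * w", OF Lat_add_2w _ wp_per1] w_notLat Lat_add_2w by auto

lemma sigma_q2: "wsigma w w' (z + 2 * w') = - exp (2 * wzeta w w' w' * (z + w')) * wsigma w w' z"
  using quasi(2)[of "2 * w'", OF Lat_add_2w' _ wp_per2] w'_notLat Lat_add_2w' by auto

lemma zeta_cont: "continuous_on A (wzeta w w')" if "A \<inter> Lat = {}"
  by (rule continuous_on_subset[OF holomorphic_on_imp_continuous_on[OF zeta_holo]]) (use that in auto)

lemma legendre: "wzeta w w' w * w' - wzeta w w' w' * w = pi * \<i> / 2"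
proof -
  define aa where "aa = Re w"
  define bb where "bb = Im w'"
  have aa: "aa > 0" and bb: "bb > 0" using w_pos w'_pos by (simp_all add: aa_def bb_def)
  have ccab: "cc \<le> aa" "cc \<le> bb" by (simp_all add: cc_def aa_def bb_def)
  define e where "e = cc / 2"
  have e: "e > 0" using cc_pos by (simp add: e_def)
  define a1 where "a1 = - w - w'"
  define a2 where "a2 = w - w'"
  define a3 where "a3 = w + w'"
  define a4 where "a4 = w' - w"
  have Ra: "Re a1 = - aa" "Im a1 = - bb" "Re a2 = aa" "Im a2 = - bb" "Re a3 = aa" "Im a3 = bb"
     "Re a4 = - aa" "Im a4 = bb"
    using w_real w'_imag by (simp_all add: a1_def a2_def a3_def a4_def aa_def bb_def)
  have rp: "rectpath a1 a3 = linepath a1 a2 +++ linepath a2 a3 +++ linepath a3 a4 +++ linepath a4 a1"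
  proof -
    have "Complex (Re a3) (Im a1) = a2" "Complex (Re a1) (Im a3) = a4"
      using Ra by (simp_all add: complex_eq_iff)
    thus ?thesis by (simp add: rectpath_def Let_def)
  qed
  define S where "S = box (Complex (- aa - e) (- bb - e)) (Complex (aa + e) (bb + e))"
  have So: "open S" "convex S" by (simp_all add: S_def open_box convex_box)
  have cbS: "cbox a1 a3 \<subseteq> S"
    using Ra e by (auto simp: S_def in_cbox_complex_iff in_box_complex_iff)
  have SLat: "S \<inter> Lat \<subseteq> {0}"
  proof
    fix z assume z: "z \<in> S \<inter> Lat"
    then obtain m n where mn: "z = om w w' m n" by (auto simp: wlattice_iff)
    have "\<bar>2 * of_int m * aa\<bar> < aa + e" "\<bar>2 * of_int n * bb\<bar> < bb + e"
      using z mn by (auto simp: S_def in_box_complex_iff Re_om Im_om aa_def bb_def)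
    hence "\<bar>of_int m\<bar> * (2 * aa) < aa + e" "\<bar>of_int n\<bar> * (2 * bb) < bb + e"
      using aa bb by (simp_all add: abs_mult)
    moreover have "aa + e < 2 * aa" "bb + e < 2 * bb" using ccab cc_pos by (simp_all add: e_def)
    ultimately have "\<bar>of_int m\<bar> * (2 * aa) < 1 * (2 * aa)" "\<bar>of_int n\<bar> * (2 * bb) < 1 * (2 * bb)"
      by simp_all
    hence "\<bar>(of_int m :: real)\<bar> < 1" "\<bar>(of_int n :: real)\<bar> < 1"
      using aa bb by (simp_all only: mult_less_cancel_right)
    hence "m = 0" "n = 0" by linarith+
    thus "z \<in> {0}" using mn by (simp add: om_def)
  qed
  define R where "R = aa + bb + 2 * e + 1"
  have R: "R > 0" using aa bb e by (simp add: R_def)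
  have SR: "S \<subseteq> ball 0 R"
  proof
    fix z assume "z \<in> S"
    hence "\<bar>Re z\<bar> < aa + e" "\<bar>Im z\<bar> < bb + e" by (auto simp: S_def in_box_complex_iff)
    moreover have "norm z \<le> \<bar>Re z\<bar> + \<bar>Im z\<bar>" by (rule cmod_le)
    ultimately show "z \<in> ball 0 R" by (simp add: R_def)
  qed
  obtain G where G: "G holomorphic_on S" "\<And>z. z \<in> S - {0} \<Longrightarrow> wzeta w w' z = 1 / z + G z"
    using zeta_local[OF So(1) SR SLat R] by blast
  have le: "Re a1 \<le> Re a3" "Im a1 \<le> Im a3" using Ra aa bb by simp_all
  have pi_sub: "path_image (rectpath a1 a3) \<subseteq> S"
    using path_image_rectpath_subset_cbox[OF le] cbS by blast
  have zero_box: "0 \<in> box a1 a3" using Ra aa bb by (simp add: in_box_complex_iff)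
  have zero_notin: "0 \<notin> path_image (rectpath a1 a3)"
    using path_image_rectpath_inter_box[OF le] zero_box by blast
  have pi_Lat: "path_image (rectpath a1 a3) \<inter> Lat = {}" using pi_sub SLat zero_notin by blast
  have h1: "(G has_contour_integral 0) (rectpath a1 a3)"
    by (rule Cauchy_theorem_convex_simple[OF G(1) So(2)]) (use pi_sub in auto)
  have h2: "((\<lambda>z. 1 / (z - 0)) has_contour_integral (2 * pi * \<i> * winding_number (rectpath a1 a3) 0)) (rectpath a1 a3)"
    by (rule has_contour_integral_winding_number) (use zero_notin in auto)
  have "((\<lambda>z. 1 / (z - 0) + G z) has_contour_integral (2 * pi * \<i> * 1 + 0)) (rectpath a1 a3)"
    using has_contour_integral_add[OF h2 h1] winding_number_rectpath[OF zero_box] by simp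
  hence "((\<lambda>z. 1 / (z - 0) + G z) has_contour_integral (2 * pi * \<i>)) (rectpath a1 a3)"
    by simp
  hence tot: "(wzeta w w' has_contour_integral (2 * pi * \<i>)) (rectpath a1 a3)"
  proof (rule has_contour_integral_eq)
    fix x assume x: "x \<in> path_image (rectpath a1 a3)"
    have "wzeta w w' x = 1 / x + G x" using G(2)[of x] x pi_sub zero_notin by auto
    thus "1 / (x - 0) + G x = wzeta w w' x" by simp
  qed
  have s12: "closed_segment a1 a2 \<inter> Lat = {}"
  proof -
    have "z \<notin> Lat" if "z \<in> closed_segment a1 a2" for z
      by (rule notLat_ImI[of _ "- 1"]) (use seg_Im_const[OF that] Ra in \<open>auto simp: bb_def not_even_m1\<close>)
    thus ?thesis by blast
  qed
  have s34: "closed_segment a3 a4 \<inter> Lat = {}"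
  proof -
    have "z \<notin> Lat" if "z \<in> closed_segment a3 a4" for z
      by (rule notLat_ImI[of _ 1]) (use seg_Im_const[OF that] Ra in \<open>auto simp: bb_def not_even_1\<close>)
    thus ?thesis by blast
  qed
  have s23: "closed_segment a2 a3 \<inter> Lat = {}"
  proof -
    have "z \<notin> Lat" if "z \<in> closed_segment a2 a3" for z
      by (rule notLat_ReI[of _ 1]) (use seg_Re_const[OF that] Ra in \<open>auto simp: aa_def not_even_1\<close>)
    thus ?thesis by blast
  qed
  have s41: "closed_segment a4 a1 \<inter> Lat = {}"
  proof -
    have "z \<notin> Lat" if "z \<in> closed_segment a4 a1" for z
      by (rule notLat_ReI[of _ "- 1"]) (use seg_Re_const[OF that] Ra in \<open>auto simp: aa_def not_even_m1\<close>)
    thus ?thesis by blast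
  qed
  define I1 where "I1 = contour_integral (linepath a1 a2) (wzeta w w')"
  define I2 where "I2 = contour_integral (linepath a2 a3) (wzeta w w')"
  define I3 where "I3 = contour_integral (linepath a3 a4) (wzeta w w')"
  define I4 where "I4 = contour_integral (linepath a4 a1) (wzeta w w')"
  have c1: "(wzeta w w' has_contour_integral I1) (linepath a1 a2)"
    unfolding I1_def by (intro has_contour_integral_integral contour_integrable_continuous_linepath zeta_cont s12)
  have c2: "(wzeta w w' has_contour_integral I2) (linepath a2 a3)"
    unfolding I2_def by (intro has_contour_integral_integral contour_integrable_continuous_linepath zeta_cont s23)
  have c3: "(wzeta w w' has_contour_integral I3) (linepath a3 a4)"
    unfolding I3_def by (intro has_contour_integral_integral contour_integrable_continuous_linepath zeta_cont s34)
  have c4: "(wzeta w w' has_contour_integral I4) (linepath a4 a1)"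
    unfolding I4_def by (intro has_contour_integral_integral contour_integrable_continuous_linepath zeta_cont s41)
  have "(wzeta w w' has_contour_integral (I1 + (I2 + (I3 + I4)))) (rectpath a1 a3)"
    unfolding rp
    by (intro has_contour_integral_join c1 c2 c3 c4 valid_path_join valid_path_linepath) auto
  hence sum: "I1 + (I2 + (I3 + I4)) = 2 * pi * \<i>"
    using tot has_contour_integral_unique by blast
  have "((\<lambda>z. wzeta w w' z + 2 * wzeta w w' w') has_contour_integral
          (- I1 + 2 * wzeta w w' w' * (a1 - a2))) (linepath a2 a1)"
    by (intro has_contour_integral_add has_contour_integral_reverse_linepath c1
        has_contour_integral_const_linepath)
  hence "((\<lambda>z. wzeta w w' (z + 2 * w')) has_contour_integral
          (- I1 + 2 * wzeta w w' w' * (a1 - a2))) (linepath a2 a1)"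
  proof (rule has_contour_integral_eq)
    fix z assume "z \<in> path_image (linepath a2 a1)"
    hence "z \<notin> Lat" using s12 by (auto simp: closed_segment_commute)
    thus "wzeta w w' z + 2 * wzeta w w' w' = wzeta w w' (z + 2 * w')" by (simp add: zeta_q2)
  qed
  hence "(wzeta w w' has_contour_integral (- I1 + 2 * wzeta w w' w' * (a1 - a2)))
           (linepath (a2 + 2 * w') (a1 + 2 * w'))"
    by (rule hci_shift)
  moreover have "a2 + 2 * w' = a3" "a1 + 2 * w' = a4" by (simp_all add: a1_def a2_def a3_def a4_def)
  ultimately have "(wzeta w w' has_contour_integral (- I1 + 2 * wzeta w w' w' * (a1 - a2))) (linepath a3 a4)"
    by simp
  hence I3: "I3 = - I1 + 2 * wzeta w w' w' * (a1 - a2)"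
    using c3 has_contour_integral_unique by blast
  have "((\<lambda>z. wzeta w w' z + 2 * wzeta w w' w) has_contour_integral
          (- I4 + 2 * wzeta w w' w * (a4 - a1))) (linepath a1 a4)"
    by (intro has_contour_integral_add has_contour_integral_reverse_linepath c4
        has_contour_integral_const_linepath)
  hence "((\<lambda>z. wzeta w w' (z + 2 * w)) has_contour_integral
          (- I4 + 2 * wzeta w w' w * (a4 - a1))) (linepath a1 a4)"
  proof (rule has_contour_integral_eq)
    fix z assume "z \<in> path_image (linepath a1 a4)"
    hence "z \<notin> Lat" using s41 by (auto simp: closed_segment_commute)
    thus "wzeta w w' z + 2 * wzeta w w' w = wzeta w w' (z + 2 * w)" by (simp add: zeta_q1)
  qed
  hence "(wzeta w w' has_contour_integral (- I4 + 2 * wzeta w w' w * (a4 - a1)))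
           (linepath (a1 + 2 * w) (a4 + 2 * w))"
    by (rule hci_shift)
  moreover have "a1 + 2 * w = a2" "a4 + 2 * w = a3" by (simp_all add: a1_def a2_def a3_def a4_def)
  ultimately have "(wzeta w w' has_contour_integral (- I4 + 2 * wzeta w w' w * (a4 - a1))) (linepath a2 a3)"
    by simp
  hence I2: "I2 = - I4 + 2 * wzeta w w' w * (a4 - a1)"
    using c2 has_contour_integral_unique by blast
  have "4 * (wzeta w w' w * w' - wzeta w w' w' * w) = 2 * pi * \<i>"
    using sum unfolding I2 I3 by (simp add: a1_def a2_def a3_def a4_def algebra_simps)
  hence "(wzeta w w' w * w' - wzeta w w' w' * w) = (2 * pi * \<i>) / 4"
    by (metis nonzero_mult_div_cancel_left zero_neq_numeral)
  thus ?thesis by simp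
qed

end



lemma psi_alg:
  fixes A B C X Y E :: complex
  shows "(- exp X * A) / (B * (- exp Y * C)) * exp E = A / (B * C) * exp (X - Y + E)"
proof (cases "B = 0 \<or> C = 0")
  case True
  then show ?thesis by auto
next
  case False
  then show ?thesis by (simp add: exp_diff exp_add field_simps)
qed

lemma v_alg:
  fixes A B C X Y E :: complex
  shows "(- exp X * A) / ((- exp Y * B) * C) * exp E = A / (B * C) * exp (X - Y + E)"
proof (cases "B = 0 \<or> C = 0")
  case True
  then show ?thesis by auto
next
  case False
  then show ?thesis by (simp add: exp_diff exp_add field_simps)
qed

context wl
begin

lemma w_nz: "w \<noteq> 0" using w_pos by auto

lemma eta1_real: "cnj (wzeta w w' w) = wzeta w w' w"
  using zeta_cnj[of w] cnj_w by simp

lemma p_cnj: "pfun w w' (cnj z) = cnj (pfun w w' z)"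
  by (simp add: pfun_def zeta_cnj eta1_real cnj_w)

lemma p_odd: "pfun w w' (- z) = - pfun w w' z"
  by (simp add: pfun_def zeta_odd)

lemma p_per1: "z \<notin> Lat \<Longrightarrow> pfun w w' (z + 2 * w) = pfun w w' z"
proof -
  assume z: "z \<notin> Lat"
  have "wzeta w w' (z + 2 * w) = wzeta w w' z + 2 * wzeta w w' w" by (rule zeta_q1[OF z])
  thus ?thesis by (simp add: pfun_def algebra_simps)
qed

lemma p_per2: "z \<notin> Lat \<Longrightarrow> pfun w w' (z + 2 * w') = pfun w w' z + pi * \<i>"
proof -
  assume z: "z \<notin> Lat"
  have "wzeta w w' (z + 2 * w') = wzeta w w' z + 2 * wzeta w w' w'" by (rule zeta_q2[OF z])
  hence "pfun w w' (z + 2 * w') = pfun w w' z + 2 * (wzeta w w' w * w' - wzeta w w' w' * w)"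
    by (simp add: pfun_def algebra_simps)
  also have "\<dots> = pfun w w' z + pi * \<i>" by (simp add: legendre)
  finally show ?thesis .
qed

lemma p_w: "pfun w w' w = 0"
  by (simp add: pfun_def)

lemma Re_p_imag: "Re k = 0 \<Longrightarrow> Re (pfun w w' k) = 0"
proof -
  assume "Re k = 0"
  hence "cnj k = - k" by (simp add: complex_eq_iff)
  hence "cnj (pfun w w' k) = - pfun w w' k" using p_cnj[of k] p_odd[of k] by simp
  thus ?thesis by (simp add: complex_eq_iff)
qed

lemma Re_p_w: "Re k = Re w \<Longrightarrow> Re (pfun w w' k) = 0"
proof -
  assume k: "Re k = Re w"
  have nl: "k - 2 * w \<notin> Lat"
    by (rule notLat_ReI[of _ "- 1"]) (use k w_real in \<open>auto simp: not_even_m1\<close>)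
  have "pfun w w' k = pfun w w' ((k - 2 * w) + 2 * w)" by simp
  also have "\<dots> = pfun w w' (k - 2 * w)" by (rule p_per1[OF nl])
  also have "k - 2 * w = - cnj k" using k w_real by (simp add: complex_eq_iff)
  also have "pfun w w' (- cnj k) = - cnj (pfun w w' k)" by (simp add: p_odd p_cnj)
  finally have "pfun w w' k = - cnj (pfun w w' k)" .
  thus ?thesis by (simp add: complex_eq_iff)
qed

lemma Im_p_top: "Im k = Im w' \<Longrightarrow> Im (pfun w w' k) = pi / 2"
proof -
  assume k: "Im k = Im w'"
  have nl: "k - 2 * w' \<notin> Lat"
    by (rule notLat_ImI[of _ "- 1"]) (use k w'_imag in \<open>auto simp: not_even_m1\<close>)
  have "pfun w w' k = pfun w w' ((k - 2 * w') + 2 * w')" by simp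
  also have "\<dots> = pfun w w' (k - 2 * w') + pi * \<i>" by (rule p_per2[OF nl])
  also have "k - 2 * w' = cnj k" using k w'_imag by (simp add: complex_eq_iff)
  also have "pfun w w' (cnj k) = cnj (pfun w w' k)" by (simp add: p_cnj)
  finally have "pfun w w' k = cnj (pfun w w' k) + pi * \<i>" .
  hence "Im (pfun w w' k) = Im (cnj (pfun w w' k) + pi * \<i>)" by (rule arg_cong)
  hence "Im (pfun w w' k) = - Im (pfun w w' k) + pi" by simp
  thus ?thesis by simp
qed

lemma Im_p_real: "Im k = 0 \<Longrightarrow> Im (pfun w w' k) = 0"
proof -
  assume "Im k = 0"
  hence "cnj k = k" by (simp add: complex_eq_iff)
  hence "cnj (pfun w w' k) = pfun w w' k" using p_cnj[of k] by simp
  thus ?thesis by (simp add: complex_eq_iff)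
qed

lemma psi_split: "PsiT w w' x k l = vfun w w' x k l * exp ((pfun w w' k + pfun w w' l) / w * x)"
proof -
  have e: "- wzeta w w' w' * (k + l) - (k + l) * wzeta w w' w / w * x + (pfun w w' k + pfun w w' l) / w * x
      = - (wzeta w w' k + wzeta w w' l) * x - wzeta w w' w' * (k + l)"
    using w_nz by (simp add: pfun_def field_simps)
  have s: "x + w' + k + l = x + k + l + w'" by (simp add: algebra_simps)
  have "vfun w w' x k l * exp ((pfun w w' k + pfun w w' l) / w * x)
     = wsigma w w' (x + k + l + w') / (wsigma w w' (x + w') * wsigma w w' (k + l)) *
       exp (- wzeta w w' w' * (k + l) - (k + l) * wzeta w w' w / w * x + (pfun w w' k + pfun w w' l) / w * x)"
    unfolding vfun_def s by (simp only: exp_add mult.assoc)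
  also have "\<dots> = PsiT w w' x k l" unfolding e PsiT_def ..
  finally show ?thesis ..
qed

lemma psi_per1:
  assumes "k \<notin> Lat"
  shows "PsiT w w' x (k + 2 * w) l = - PsiT w w' x k l"
proof -
  define A where "A = wsigma w w' (x + k + l + w')"
  define B where "B = wsigma w w' (x + w')"
  define C where "C = wsigma w w' (k + l)"
  define E where "E = - (wzeta w w' k + wzeta w w' l) * x - wzeta w w' w' * (k + l)"
  define \<eta> where "\<eta> = wzeta w w' w"
  have 1: "wsigma w w' (x + (k + 2 * w) + l + w') = - exp (2 * \<eta> * ((x + k + l + w') + w)) * A"
    using sigma_q1[of "x + k + l + w'"] by (simp add: A_def \<eta>_def algebra_simps)
  have 2: "wsigma w w' (k + 2 * w + l) = - exp (2 * \<eta> * ((k + l) + w)) * C"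
    using sigma_q1[of "k + l"] by (simp add: C_def \<eta>_def algebra_simps)
  have 3: "- (wzeta w w' (k + 2 * w) + wzeta w w' l) * x - wzeta w w' w' * (k + 2 * w + l)
      = E - 2 * \<eta> * x - 2 * wzeta w w' w' * w"
    using zeta_q1[OF assms] by (simp add: E_def \<eta>_def algebra_simps)
  have "PsiT w w' x (k + 2 * w) l = A / (B * C) *
      exp (2 * \<eta> * ((x + k + l + w') + w) - 2 * \<eta> * ((k + l) + w) + (E - 2 * \<eta> * x - 2 * wzeta w w' w' * w))"
    unfolding PsiT_def 1 2 3 B_def[symmetric] by (rule psi_alg)
  also have "2 * \<eta> * ((x + k + l + w') + w) - 2 * \<eta> * ((k + l) + w) + (E - 2 * \<eta> * x - 2 * wzeta w w' w' * w)
      = E + 2 * (wzeta w w' w * w' - wzeta w w' w' * w)"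
    by (simp add: \<eta>_def algebra_simps)
  also have "\<dots> = E + pi * \<i>" by (simp add: legendre)
  also have "exp (E + pi * \<i>) = - exp E" by (simp add: exp_add)
  finally show ?thesis by (simp add: PsiT_def A_def B_def C_def E_def)
qed

lemma psi_per2:
  assumes "k \<notin> Lat"
  shows "PsiT w w' x (k + 2 * w') l = PsiT w w' x k l"
proof -
  define A where "A = wsigma w w' (x + k + l + w')"
  define B where "B = wsigma w w' (x + w')"
  define C where "C = wsigma w w' (k + l)"
  define E where "E = - (wzeta w w' k + wzeta w w' l) * x - wzeta w w' w' * (k + l)"
  define \<eta> where "\<eta> = wzeta w w' w'"
  have 1: "wsigma w w' (x + (k + 2 * w') + l + w') = - exp (2 * \<eta> * ((x + k + l + w') + w')) * A"
    using sigma_q2[of "x + k + l + w'"] by (simp add: A_def \<eta>_def algebra_simps)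
  have 2: "wsigma w w' (k + 2 * w' + l) = - exp (2 * \<eta> * ((k + l) + w')) * C"
    using sigma_q2[of "k + l"] by (simp add: C_def \<eta>_def algebra_simps)
  have 3: "- (wzeta w w' (k + 2 * w') + wzeta w w' l) * x - wzeta w w' w' * (k + 2 * w' + l)
      = E - 2 * \<eta> * x - 2 * \<eta> * w'"
    using zeta_q2[OF assms] by (simp add: E_def \<eta>_def algebra_simps)
  have "PsiT w w' x (k + 2 * w') l = A / (B * C) *
      exp (2 * \<eta> * ((x + k + l + w') + w') - 2 * \<eta> * ((k + l) + w') + (E - 2 * \<eta> * x - 2 * \<eta> * w'))"
    unfolding PsiT_def 1 2 3 B_def[symmetric] by (rule psi_alg)
  also have "2 * \<eta> * ((x + k + l + w') + w') - 2 * \<eta> * ((k + l) + w') + (E - 2 * \<eta> * x - 2 * \<eta> * w') = E"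
    by (simp add: algebra_simps)
  finally show ?thesis by (simp add: PsiT_def A_def B_def C_def E_def)
qed

lemma v_per:
  "vfun w w' (x + 2 * w) a b = vfun w w' x a b"
proof -
  define A where "A = wsigma w w' (x + w' + a + b)"
  define B where "B = wsigma w w' (x + w')"
  define C where "C = wsigma w w' (a + b)"
  define \<eta> where "\<eta> = wzeta w w' w"
  define E where "E = - wzeta w w' w' * (a + b) - (a + b) * \<eta> / w * x"
  have 1: "wsigma w w' (x + 2 * w + w' + a + b) = - exp (2 * \<eta> * ((x + w' + a + b) + w)) * A"
    using sigma_q1[of "x + w' + a + b"] by (simp add: A_def \<eta>_def algebra_simps)
  have 2: "wsigma w w' (x + 2 * w + w') = - exp (2 * \<eta> * ((x + w') + w)) * B"
    using sigma_q1[of "x + w'"] by (simp add: B_def \<eta>_def algebra_simps)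
  have 3: "- wzeta w w' w' * (a + b) - (a + b) * \<eta> / w * (x + 2 * w) = E - 2 * \<eta> * (a + b)"
    using w_nz by (simp add: E_def field_simps)
  have "vfun w w' (x + 2 * w) a b = A / (B * C) *
      exp (2 * \<eta> * ((x + w' + a + b) + w) - 2 * \<eta> * ((x + w') + w) + (E - 2 * \<eta> * (a + b)))"
    unfolding vfun_def \<eta>_def[symmetric] 1 2 3 C_def[symmetric] by (rule v_alg)
  also have "2 * \<eta> * ((x + w' + a + b) + w) - 2 * \<eta> * ((x + w') + w) + (E - 2 * \<eta> * (a + b)) = E"
    by (simp add: algebra_simps)
  finally show ?thesis by (simp add: vfun_def A_def B_def C_def E_def \<eta>_def)
qed

end



lemma refl_deriv:
  fixes f :: "complex \<Rightarrow> complex" and \<epsilon> :: real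
  assumes S: "open S" "z0 \<in> S" and sym: "\<And>z. z \<in> S \<Longrightarrow> f (of_real \<epsilon> * cnj z + d) = cnj (f z)"
    and D: "(f has_field_derivative D) (at z0)" and fix0: "of_real \<epsilon> * cnj z0 + d = z0"
  shows "D = cnj D * of_real \<epsilon>"
proof -
  define u0 where "u0 = of_real \<epsilon> * z0 + cnj d"
  have cu: "cnj u0 = z0" using fix0 by (simp add: u0_def)
  have D': "(f has_field_derivative D) (at (cnj u0))" using D cu by simp
  note c1 = has_field_derivative_cnj_cnj[OF D']
  have lin: "((\<lambda>z. of_real \<epsilon> * z + cnj d) has_field_derivative of_real \<epsilon>) (at z0)"
    by (auto intro!: derivative_eq_intros)
  have "((\<lambda>z. (cnj \<circ> f \<circ> cnj) (of_real \<epsilon> * z + cnj d)) has_field_derivative cnj D * of_real \<epsilon>) (at z0)"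
    by (rule DERIV_chain'[OF lin]) (use c1 in \<open>simp add: u0_def[symmetric] o_def\<close>)
  hence g: "((\<lambda>z. cnj (f (of_real \<epsilon> * cnj z + d))) has_field_derivative cnj D * of_real \<epsilon>) (at z0)"
    by simp
  have "(f has_field_derivative cnj D * of_real \<epsilon>) (at z0)"
    by (rule has_field_derivative_transform_within_open[OF g S]) (simp add: sym)
  thus ?thesis using D DERIV_unique by blast
qed

locale wl2 = wl +
  fixes g2 g3 :: real
  assumes disc: "g2 ^ 3 - 27 * g3\<^sup>2 > 0"
    and ode: "\<forall>z. z \<notin> wlattice w w' \<longrightarrow>
        (deriv (wp w w') z)\<^sup>2 = 4 * (wp w w' z) ^ 3 - of_real g2 * wp w w' z - of_real g3"
begin

definition ss :: real where "ss = sqrt (g2 / 12)"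
definition fc :: "real \<Rightarrow> real" where "fc x = 4 * x ^ 3 - g2 * x - g3"

lemma g2_pos: "g2 > 0"
proof (rule ccontr)
  assume "\<not> g2 > 0"
  hence "g2 \<le> 0" by simp
  hence "g2 * g2^2 \<le> 0" by (simp add: mult_nonpos_nonneg)
  hence "g2 ^ 3 \<le> 0" by (simp add: power3_eq_cube power2_eq_square)
  moreover have "27 * g3\<^sup>2 \<ge> 0" by simp
  ultimately show False using disc by linarith
qed

lemma ss_nonneg: "ss \<ge> 0" using g2_pos by (simp add: ss_def)

lemma fc_ss: "fc ss < 0" "fc (- ss) > 0"
proof -
  obtain s where sdef: "s = ss" by blast
  have s2: "s ^ 2 = g2 / 12" using g2_pos by (simp add: ss_def sdef)
  have s0: "s \<ge> 0" using ss_nonneg sdef by simp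
  define q where "q = 8 * s ^ 3"
  have q0: "q \<ge> 0" using s0 by (simp add: q_def)
  have "q ^ 2 = 64 * (s ^ 2) ^ 3" by (simp add: q_def power_mult_distrib power_mult[symmetric])
  also have "\<dots> = g2 ^ 3 / 27" by (simp add: s2 power_divide)
  finally have "q ^ 2 > g3 ^ 2" using disc by simp
  hence "\<bar>g3\<bar>^2 < q^2" by simp
  hence a: "\<bar>g3\<bar> < q" using q0 by (rule power2_less_imp_less)
  have g2e: "g2 = 12 * s^2" using s2 by simp
  have f1: "fc s = 4 * s ^ 3 - g2 * s - g3" "fc (- s) = 4 * (- s) ^ 3 - g2 * (- s) - g3"
    by (simp_all add: fc_def)
  have e1: "4 * s ^ 3 - g2 * s - g3 = - q - g3"
    unfolding g2e q_def by (simp add: power3_eq_cube power2_eq_square algebra_simps)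
  have e2: "4 * (- s) ^ 3 - g2 * (- s) - g3 = q - g3"
    unfolding g2e q_def by (simp add: power3_eq_cube power2_eq_square algebra_simps)
  have "fc s < 0" "fc (- s) > 0" using e1 e2 f1 a by linarith+
  thus "fc ss < 0" "fc (- ss) > 0" using sdef by simp_all
qed

lemma wp_real_sym:
  assumes z0: "z0 \<notin> Lat" and sym: "\<And>z. z \<notin> Lat \<Longrightarrow> wp w w' (of_real \<epsilon> * cnj z + d) = cnj (wp w w' z)"
    and fix0: "of_real \<epsilon> * cnj z0 + d = z0"
  shows "Im (wp w w' z0) = 0" and "deriv (wp w w') z0 = cnj (deriv (wp w w') z0) * of_real \<epsilon>"
proof -
  have h: "wp w w' z0 = cnj (wp w w' z0)" using sym[OF z0] fix0 by simp
  have "Im (wp w w' z0) = Im (cnj (wp w w' z0))" by (rule arg_cong[OF h])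
  thus "Im (wp w w' z0) = 0" by simp
  show "deriv (wp w w') z0 = cnj (deriv (wp w w') z0) * of_real \<epsilon>"
    by (rule refl_deriv[OF open_compl_Lat _ _ wp_deriv[OF z0]]) (use z0 sym fix0 in auto)
qed

lemma sign_pos:
  assumes z0: "z0 \<notin> Lat" and sym: "\<And>z. z \<notin> Lat \<Longrightarrow> wp w w' (cnj z + d) = cnj (wp w w' z)"
    and fix0: "cnj z0 + d = z0"
  shows "Im (wp w w' z0) = 0" and "fc (Re (wp w w' z0)) \<ge> 0"
proof -
  have sym': "\<And>z. z \<notin> Lat \<Longrightarrow> wp w w' (of_real 1 * cnj z + d) = cnj (wp w w' z)" using sym by simp
  have fix': "of_real 1 * cnj z0 + d = z0" using fix0 by simp
  note r = wp_real_sym[OF z0 sym' fix']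
  show im: "Im (wp w w' z0) = 0" by (rule r(1))
  define D where "D = deriv (wp w w') z0"
  define r where "r = Re (wp w w' z0)"
  have h: "D = cnj D" using r(2) by (simp add: D_def)
  have "Im D = Im (cnj D)" by (rule arg_cong[OF h])
  hence "Im D = 0" by simp
  hence D: "D = of_real (Re D)" by (simp add: complex_eq_iff)
  have W: "wp w w' z0 = of_real r" using im by (simp add: complex_eq_iff r_def)
  have "D ^ 2 = 4 * (wp w w' z0) ^ 3 - of_real g2 * wp w w' z0 - of_real g3"
    using ode z0 by (simp add: D_def)
  hence "complex_of_real ((Re D)^2) = complex_of_real (fc r)"
    by (subst (asm) D) (simp add: fc_def W)
  hence "(Re D)^2 = fc r" by (simp only: of_real_eq_iff)
  hence "fc r = (Re D)^2" by simp
  thus "fc (Re (wp w w' z0)) \<ge> 0" unfolding r_def[symmetric] by simp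
qed

lemma sign_neg:
  assumes z0: "z0 \<notin> Lat" and sym: "\<And>z. z \<notin> Lat \<Longrightarrow> wp w w' (- cnj z) = cnj (wp w w' z)"
    and fix0: "- cnj z0 = z0"
  shows "Im (wp w w' z0) = 0" and "fc (Re (wp w w' z0)) \<le> 0"
proof -
  have sym': "\<And>z. z \<notin> Lat \<Longrightarrow> wp w w' (of_real (- 1) * cnj z + 0) = cnj (wp w w' z)" using sym by simp
  have fix': "of_real (- 1) * cnj z0 + 0 = z0" using fix0 by simp
  note r = wp_real_sym[OF z0 sym' fix']
  show im: "Im (wp w w' z0) = 0" by (rule r(1))
  define D where "D = deriv (wp w w') z0"
  define r where "r = Re (wp w w' z0)"
  have h: "D = - cnj D" using r(2) by (simp add: D_def)
  have "Re D = Re (- cnj D)" by (rule arg_cong[OF h])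
  hence "Re D = 0" by simp
  hence D: "D = \<i> * of_real (Im D)" by (simp add: complex_eq_iff)
  have W: "wp w w' z0 = of_real r" using im by (simp add: complex_eq_iff r_def)
  have "D ^ 2 = 4 * (wp w w' z0) ^ 3 - of_real g2 * wp w w' z0 - of_real g3"
    using ode z0 by (simp add: D_def)
  hence "complex_of_real (- ((Im D)^2)) = complex_of_real (fc r)"
    by (subst (asm) D) (simp add: fc_def W power_mult_distrib)
  hence "- ((Im D)^2) = fc r" by (simp only: of_real_eq_iff)
  hence "fc r = - ((Im D)^2)" by simp
  thus "fc (Re (wp w w' z0)) \<le> 0" unfolding r_def[symmetric] by simp
qed

end



context wl
begin

lemma notLat_real: "0 < t \<Longrightarrow> t < 2 * Re w \<Longrightarrow> complex_of_real t \<notin> Lat"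
proof -
  assume t: "0 < t" "t < 2 * Re w"
  show ?thesis
  proof (rule notLat_ReI[of _ "t / Re w"])
    show "Re (complex_of_real t) = t / Re w * Re w" using w_pos by simp
    have "0 < t / Re w" "t / Re w < 2" using t w_pos by (simp_all add: field_simps)
    thus "t / Re w \<noteq> 2 * real_of_int m" for m by (rule not_even_open)
  qed
qed

lemma notLat_imag: "0 < y \<Longrightarrow> y < 2 * Im w' \<Longrightarrow> \<i> * complex_of_real y \<notin> Lat"
proof -
  assume y: "0 < y" "y < 2 * Im w'"
  show ?thesis
  proof (rule notLat_ImI[of _ "y / Im w'"])
    show "Im (\<i> * complex_of_real y) = y / Im w' * Im w'" using w'_pos by simp
    have "0 < y / Im w'" "y / Im w' < 2" using y w'_pos by (simp_all add: field_simps)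
    thus "y / Im w' \<noteq> 2 * real_of_int m" for m by (rule not_even_open)
  qed
qed

lemma notLat_top: "complex_of_real x + w' \<notin> Lat"
  by (rule notLat_ImI[of _ 1]) (auto simp: not_even_1)

lemma w'_eq2: "w' = \<i> * complex_of_real (Im w')"
  using w'_imag by (simp add: complex_eq_iff)

lemma w_eq2: "w = complex_of_real (Re w)"
  using w_real by (simp add: complex_eq_iff)

lemma cont_Re_wp:
  assumes "continuous_on I \<gamma>" "\<And>t. t \<in> I \<Longrightarrow> \<gamma> t \<notin> Lat"
  shows "continuous_on I (\<lambda>t. Re (wp w w' (\<gamma> t)))"
proof -
  have "continuous_on I (\<lambda>t. wp w w' (\<gamma> t))"
    by (rule continuous_on_compose2[OF holomorphic_on_imp_continuous_on[OF wp_holo] assms(1)])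
       (use assms(2) in auto)
  thus ?thesis by (rule continuous_on_Re)
qed

lemma near0:
  obtains G where "G holomorphic_on ball 0 cc"
    "\<And>z. z \<in> ball 0 cc - {0} \<Longrightarrow> wzeta w w' z = 1 / z + G z"
    "\<And>z. z \<in> ball 0 cc - {0} \<Longrightarrow> wp w w' z = 1 / z ^ 2 - deriv G z"
proof -
  have sub: "ball 0 cc \<inter> Lat \<subseteq> {0}"
  proof
    fix z assume z: "z \<in> ball 0 cc \<inter> Lat"
    show "z \<in> {0}"
    proof (rule ccontr)
      assume "z \<notin> {0}"
      hence "norm z \<ge> 2 * cc" using z Lat_small by auto
      moreover have "norm z < cc" using z by simp
      ultimately show False using cc_pos by simp
    qed
  qed
  obtain G where G: "G holomorphic_on ball 0 cc" "\<And>z. z \<in> ball 0 cc - {0} \<Longrightarrow> wzeta w w' z = 1 / z + G z"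
    using zeta_local[of "ball 0 cc" cc] sub cc_pos by auto
  have "wp w w' z = 1 / z ^ 2 - deriv G z" if z: "z \<in> ball 0 cc - {0}" for z
  proof -
    have zL: "z \<notin> Lat" using z sub by auto
    have S: "open (ball 0 cc - {0})" by (simp add: open_Diff)
    have dG: "(G has_field_derivative deriv G z) (at z)"
      using holomorphic_derivI[OF G(1) open_ball, of z] z by simp
    have d1: "((\<lambda>z. 1 / z + G z) has_field_derivative (- 1 / z ^ 2 + deriv G z)) (at z)"
      using z dG by (auto intro!: derivative_eq_intros simp: power2_eq_square field_simps)
    have "(wzeta w w' has_field_derivative (- 1 / z ^ 2 + deriv G z)) (at z)"
      by (rule has_field_derivative_transform_within_open[OF d1 S z]) (use G(2) in auto)
    hence "- wp w w' z = - 1 / z ^ 2 + deriv G z"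
      using zeta_deriv[OF zL] DERIV_unique by blast
    thus ?thesis by (simp add: field_simps)
  qed
  thus ?thesis using that G by blast
qed

lemma sym_real: "z \<notin> Lat \<Longrightarrow> wp w w' (cnj z + 0) = cnj (wp w w' z)"
  by (simp add: wp_cnj)

lemma sym_top: "z \<notin> Lat \<Longrightarrow> wp w w' (cnj z + 2 * w') = cnj (wp w w' z)"
proof -
  assume z: "z \<notin> Lat"
  have cz: "cnj z \<notin> Lat" using z Lat_cnj by simp
  have "wp w w' (cnj z + 2 * w') = wp w w' (cnj z)"
    by (rule wp_per2[OF cz]) (use cz Lat_add_2w' in simp)
  thus ?thesis using wp_cnj[OF z] by simp
qed

lemma sym_imag: "z \<notin> Lat \<Longrightarrow> wp w w' (- cnj z) = cnj (wp w w' z)"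
proof -
  assume z: "z \<notin> Lat"
  have cz: "cnj z \<notin> Lat" using z Lat_cnj by simp
  show ?thesis using wp_even[OF cz] wp_cnj[OF z] by simp
qed

end

context wl2
begin

lemma real_sign: "0 < t \<Longrightarrow> t < 2 * Re w \<Longrightarrow>
    Im (wp w w' (of_real t)) = 0 \<and> fc (Re (wp w w' (of_real t))) \<ge> 0"
  using sign_pos[OF notLat_real sym_real, of t] by simp

lemma top_sign: "Im (wp w w' (of_real x + w')) = 0 \<and> fc (Re (wp w w' (of_real x + w'))) \<ge> 0"
  using sign_pos[OF notLat_top sym_top, of x] cnj_w' by simp

lemma imag_sign: "0 < y \<Longrightarrow> y < 2 * Im w' \<Longrightarrow>
    Im (wp w w' (\<i> * of_real y)) = 0 \<and> fc (Re (wp w w' (\<i> * of_real y))) \<le> 0"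
  using sign_neg[OF notLat_imag sym_imag, of y] by simp

lemma lim_real: "filterlim (\<lambda>t. Re (wp w w' (of_real t))) at_top (at_right 0)"
proof -
  obtain G where G: "G holomorphic_on ball 0 cc"
    "\<And>z. z \<in> ball 0 cc - {0} \<Longrightarrow> wp w w' z = 1 / z ^ 2 - deriv G z"
    using near0 by metis
  have "continuous_on (ball 0 cc) (deriv G)"
    by (rule holomorphic_on_imp_continuous_on[OF holomorphic_deriv[OF G(1) open_ball]])
  hence cG: "isCont (deriv G) 0" using cc_pos by (simp add: continuous_on_eq_continuous_at[OF open_ball])
  have t0: "((\<lambda>t. complex_of_real t) \<longlongrightarrow> 0) (at_right 0)"
    using tendsto_of_real[OF tendsto_ident_at[of "0::real" "{0<..}"]] by simp
  have h: "((\<lambda>t. - Re (deriv G (of_real t))) \<longlongrightarrow> - Re (deriv G 0)) (at_right 0)"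
    by (intro tendsto_minus tendsto_Re isCont_tendsto_compose[OF cG t0])
  have k: "filterlim (\<lambda>t. inverse t ^ 2) at_top (at_right (0::real))"
    by (rule filterlim_pow_at_top[OF _ filterlim_inverse_at_top_right]) simp
  have s: "filterlim (\<lambda>t. - Re (deriv G (of_real t)) + inverse t ^ 2) at_top (at_right 0)"
    by (rule filterlim_tendsto_add_at_top[OF h k])
  have ev: "eventually (\<lambda>t. - Re (deriv G (of_real t)) + inverse t ^ 2 = Re (wp w w' (of_real t))) (at_right 0)"
    using eventually_at_right_real[OF cc_pos]
  proof eventually_elim
    case (elim t)
    have "complex_of_real t \<in> ball 0 cc - {0}" using elim by (auto simp: dist_norm)
    hence "wp w w' (of_real t) = 1 / (of_real t) ^ 2 - deriv G (of_real t)" by (rule G(2))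
    moreover have "Re (1 / (complex_of_real t) ^ 2) = inverse t ^ 2"
    proof -
      have e: "1 / (complex_of_real t) ^ 2 = complex_of_real (1 / t ^ 2)" by simp
      have "Re (1 / (complex_of_real t) ^ 2) = 1 / t ^ 2" unfolding e by (simp only: Re_complex_of_real)
      moreover have "inverse t ^ 2 = 1 / t ^ 2" by (simp add: power_inverse inverse_eq_divide power_one_over)
      ultimately show ?thesis by simp
    qed
    ultimately show ?case by simp
  qed
  show ?thesis using filterlim_cong[OF refl refl ev] s by simp
qed

lemma lim_imag: "filterlim (\<lambda>y. Re (wp w w' (\<i> * of_real y))) at_bot (at_right 0)"
proof -
  obtain G where G: "G holomorphic_on ball 0 cc"
    "\<And>z. z \<in> ball 0 cc - {0} \<Longrightarrow> wp w w' z = 1 / z ^ 2 - deriv G z"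
    using near0 by metis
  have "continuous_on (ball 0 cc) (deriv G)"
    by (rule holomorphic_on_imp_continuous_on[OF holomorphic_deriv[OF G(1) open_ball]])
  hence cG: "isCont (deriv G) 0" using cc_pos by (simp add: continuous_on_eq_continuous_at[OF open_ball])
  have t0: "((\<lambda>t. \<i> * complex_of_real t) \<longlongrightarrow> 0) (at_right 0)"
    using tendsto_mult[OF tendsto_const[of \<i>] tendsto_of_real[OF tendsto_ident_at[of "0::real" "{0<..}"]]]
    by simp
  have h: "((\<lambda>t. Re (deriv G (\<i> * of_real t))) \<longlongrightarrow> Re (deriv G 0)) (at_right 0)"
    by (intro tendsto_Re isCont_tendsto_compose[OF cG t0])
  have k: "filterlim (\<lambda>t. inverse t ^ 2) at_top (at_right (0::real))"
    by (rule filterlim_pow_at_top[OF _ filterlim_inverse_at_top_right]) simp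
  have s: "filterlim (\<lambda>t. Re (deriv G (\<i> * of_real t)) + inverse t ^ 2) at_top (at_right 0)"
    by (rule filterlim_tendsto_add_at_top[OF h k])
  have ev: "eventually (\<lambda>t. Re (deriv G (\<i> * of_real t)) + inverse t ^ 2 = - Re (wp w w' (\<i> * of_real t))) (at_right 0)"
    using eventually_at_right_real[OF cc_pos]
  proof eventually_elim
    case (elim t)
    have "\<i> * of_real t \<in> ball 0 cc - {0}" using elim by (auto simp: norm_mult dist_0_norm)
    hence "wp w w' (\<i> * of_real t) = 1 / (\<i> * of_real t) ^ 2 - deriv G (\<i> * of_real t)" by (rule G(2))
    moreover have "Re (1 / (\<i> * complex_of_real t) ^ 2) = - (inverse t ^ 2)"
      using elim by (simp add: power2_eq_square field_simps)
    ultimately show ?case by simp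
  qed
  have "filterlim (\<lambda>t. - Re (wp w w' (\<i> * of_real t))) at_top (at_right 0)"
    using filterlim_cong[OF refl refl ev] s by simp
  thus ?thesis by (simp add: filterlim_uminus_at_bot)
qed

lemma wp_real_gt:
  assumes t0: "0 < t0" "t0 \<le> Re w"
  shows "Re (wp w w' (of_real t0)) > ss"
proof (rule ccontr)
  assume "\<not> ?thesis"
  hence le: "Re (wp w w' (of_real t0)) \<le> ss" by simp
  have "eventually (\<lambda>t. ss + 1 \<le> Re (wp w w' (of_real t))) (at_right 0)"
    using lim_real by (simp add: filterlim_at_top)
  moreover have "eventually (\<lambda>t. t \<in> {0<..<t0}) (at_right 0)"
    by (rule eventually_at_right_real) (use t0 in simp)
  ultimately have "eventually (\<lambda>t. ss + 1 \<le> Re (wp w w' (of_real t)) \<and> t \<in> {0<..<t0}) (at_right 0)"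
    by eventually_elim auto
  then obtain t1 where t1: "ss + 1 \<le> Re (wp w w' (of_real t1))" "0 < t1" "t1 < t0"
    using eventually_happens'[of "at_right (0::real)"] by auto
  have cont: "continuous_on {t1..t0} (\<lambda>t. Re (wp w w' (of_real t)))"
  proof (rule cont_Re_wp)
    show "continuous_on {t1..t0} (\<lambda>t. complex_of_real t)" by (intro continuous_intros)
    fix t assume "t \<in> {t1..t0}"
    thus "complex_of_real t \<notin> Lat" using t0 t1 w_pos by (intro notLat_real) auto
  qed
  obtain t where t: "t1 \<le> t" "t \<le> t0" "Re (wp w w' (of_real t)) = ss"
    using IVT2'[of "\<lambda>t. Re (wp w w' (of_real t))" t0 ss t1, OF le _ _ cont] t1 by auto
  have "fc (Re (wp w w' (of_real t))) \<ge> 0" using real_sign[of t] t t0 t1 w_pos by auto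
  thus False using t fc_ss by simp
qed

lemma wp_w'_lt: "Re (wp w w' w') < - ss"
proof (rule ccontr)
  define b where "b = Im w'"
  have b: "b > 0" using w'_pos by (simp add: b_def)
  have wb: "w' = \<i> * of_real b" using w'_eq2 by (simp add: b_def)
  assume "\<not> ?thesis"
  hence ge: "- ss \<le> Re (wp w w' (\<i> * of_real b))" using wb by simp
  have "eventually (\<lambda>y. Re (wp w w' (\<i> * of_real y)) \<le> - ss - 1) (at_right 0)"
    using lim_imag by (simp add: filterlim_at_bot)
  moreover have "eventually (\<lambda>t. t \<in> {0<..<b}) (at_right 0)"
    by (rule eventually_at_right_real) (use b in simp)
  ultimately have "eventually (\<lambda>t. Re (wp w w' (\<i> * of_real t)) \<le> - ss - 1 \<and> t \<in> {0<..<b}) (at_right 0)"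
    by eventually_elim auto
  then obtain y1 where y1: "Re (wp w w' (\<i> * of_real y1)) \<le> - ss - 1" "0 < y1" "y1 < b"
    using eventually_happens'[of "at_right (0::real)"] by auto
  have cont: "continuous_on {y1..b} (\<lambda>t. Re (wp w w' (\<i> * of_real t)))"
  proof (rule cont_Re_wp)
    show "continuous_on {y1..b} (\<lambda>t. \<i> * complex_of_real t)" by (intro continuous_intros)
    fix t assume "t \<in> {y1..b}"
    thus "\<i> * complex_of_real t \<notin> Lat" using b y1 by (intro notLat_imag) (auto simp: b_def)
  qed
  obtain y where y: "y1 \<le> y" "y \<le> b" "Re (wp w w' (\<i> * of_real y)) = - ss"
    using IVT'[of "\<lambda>t. Re (wp w w' (\<i> * of_real t))" y1 "- ss" b, OF _ ge _ cont] y1 by auto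
  have "fc (Re (wp w w' (\<i> * of_real y))) \<le> 0" using imag_sign[of y] y y1 b by (auto simp: b_def)
  thus False using y fc_ss by simp
qed

lemma wp_top_lt: "0 \<le> x \<Longrightarrow> Re (wp w w' (of_real x + w')) < ss"
proof (rule ccontr)
  assume x: "0 \<le> x" and "\<not> Re (wp w w' (of_real x + w')) < ss"
  hence ge: "ss \<le> Re (wp w w' (of_real x + w'))" by simp
  have le: "Re (wp w w' (of_real 0 + w')) \<le> ss" using wp_w'_lt ss_nonneg by simp
  have cont: "continuous_on {0..x} (\<lambda>t. Re (wp w w' (of_real t + w')))"
    by (rule cont_Re_wp) (auto intro!: continuous_intros notLat_top)
  obtain y where y: "0 \<le> y" "y \<le> x" "Re (wp w w' (of_real y + w')) = ss"
    using IVT'[of "\<lambda>t. Re (wp w w' (of_real t + w'))" 0 ss x, OF le ge x cont] by auto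
  have "fc (Re (wp w w' (of_real y + w'))) \<ge> 0" using top_sign[of y] by simp
  thus False using y fc_ss by simp
qed

lemma eta_gt: "Re (wzeta w w' w) > - Re w * ss"
proof -
  define a where "a = Re w"
  have a: "a > 0" using w_pos by (simp add: a_def)
  define \<phi> where "\<phi> = (\<lambda>x. Re (wzeta w w' (of_real x + w')))"
  have der: "(\<phi> has_real_derivative Re (- wp w w' (of_real x + w'))) (at x)" for x
  proof -
    have "((\<lambda>z. wzeta w w' (z + w')) has_field_derivative - wp w w' (of_real x + w') * 1) (at (of_real x))"
      by (rule DERIV_chain'[of "\<lambda>z. z + w'" 1 "of_real x" UNIV "wzeta w w'"])
         (auto intro!: derivative_eq_intros zeta_deriv notLat_top)
    hence "((\<lambda>t. wzeta w w' (of_real t + w')) has_vector_derivative - wp w w' (of_real x + w')) (at x)"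
      using has_vector_derivative_real_field by fastforce
    thus ?thesis unfolding \<phi>_def by (rule has_field_derivative_Re)
  qed
  obtain \<xi> where \<xi>: "0 < \<xi>" "\<xi> < 2 * a" "\<phi> (2 * a) - \<phi> 0 = (2 * a - 0) * Re (- wp w w' (of_real \<xi> + w'))"
    using MVT2[of 0 "2 * a" \<phi> "\<lambda>x. Re (- wp w w' (of_real x + w'))"] der a by auto
  have "\<phi> (2 * a) - \<phi> 0 = Re (wzeta w w' (w' + 2 * w) - wzeta w w' w')"
    unfolding \<phi>_def using w_eq2 by (simp add: a_def add.commute)
  also have "\<dots> = 2 * Re (wzeta w w' w)" using zeta_q1[OF w'_notLat] by simp
  finally have "2 * Re (wzeta w w' w) = 2 * a * (- Re (wp w w' (of_real \<xi> + w')))" using \<xi> by simp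
  moreover have "Re (wp w w' (of_real \<xi> + w')) < ss" using wp_top_lt \<xi> by simp
  ultimately have "2 * Re (wzeta w w' w) > 2 * a * (- ss)"
    using a by (smt (verit) mult_strict_left_mono)
  thus ?thesis by (simp add: a_def mult.commute)
qed

lemma p_deriv_pos:
  assumes t: "0 < t" "t \<le> Re w"
  shows "((\<lambda>t. Re (pfun w w' (of_real t))) has_real_derivative
           Re (wzeta w w' w) + Re w * Re (wp w w' (of_real t))) (at t)"
    and "Re (wzeta w w' w) + Re w * Re (wp w w' (of_real t)) > 0"
proof -
  have tL: "of_real t \<notin> Lat" using t w_pos by (intro notLat_real) auto
  have "(pfun w w' has_field_derivative wzeta w w' w - w * (- wp w w' (of_real t))) (at (of_real t))"
    unfolding pfun_def[abs_def]
    by (auto intro!: derivative_eq_intros zeta_deriv[OF tL])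
  hence "((\<lambda>t. pfun w w' (of_real t)) has_vector_derivative wzeta w w' w - w * (- wp w w' (of_real t))) (at t)"
    using has_vector_derivative_real_field by fastforce
  hence "((\<lambda>t. Re (pfun w w' (of_real t))) has_real_derivative Re (wzeta w w' w - w * (- wp w w' (of_real t)))) (at t)"
    by (rule has_field_derivative_Re)
  moreover have "Re (wzeta w w' w - w * (- wp w w' (of_real t))) = Re (wzeta w w' w) + Re w * Re (wp w w' (of_real t))"
    using w_real by simp
  ultimately show "((\<lambda>t. Re (pfun w w' (of_real t))) has_real_derivative
           Re (wzeta w w' w) + Re w * Re (wp w w' (of_real t))) (at t)" using w_real by simp
  have "Re w * Re (wp w w' (of_real t)) > Re w * ss" using wp_real_gt[OF t] w_pos by simp
  thus "Re (wzeta w w' w) + Re w * Re (wp w w' (of_real t)) > 0" using eta_gt by simp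
qed

lemma p_mono: "mono_on {0<..Re w} (\<lambda>t. Re (pfun w w' (of_real t)))"
proof (rule mono_onI)
  fix r s assume rs: "r \<in> {0<..Re w}" "s \<in> {0<..Re w}" "r \<le> s"
  show "Re (pfun w w' (of_real r)) \<le> Re (pfun w w' (of_real s))"
  proof (rule DERIV_nonneg_imp_nondecreasing[OF rs(3)])
    fix x assume x: "r \<le> x" "x \<le> s"
    have x': "0 < x" "x \<le> Re w" using x rs by auto
    show "\<exists>y. ((\<lambda>t. Re (pfun w w' (of_real t))) has_real_derivative y) (at x) \<and> 0 \<le> y"
      using p_deriv_pos[OF x'] by (intro exI[of _ "Re (wzeta w w' w) + Re w * Re (wp w w' (of_real x))"]) auto
  qed
qed

lemma p_lim: "filterlim (\<lambda>t. Re (pfun w w' (of_real t))) at_bot (at_right 0)"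
proof -
  obtain G where G: "G holomorphic_on ball 0 cc"
    "\<And>z. z \<in> ball 0 cc - {0} \<Longrightarrow> wzeta w w' z = 1 / z + G z"
    using near0 by metis
  define a where "a = Re w"
  have a: "a > 0" using w_pos by (simp add: a_def)
  have "continuous_on (ball 0 cc) G"
    by (rule holomorphic_on_imp_continuous_on[OF G(1)])
  hence cG: "isCont G 0" using cc_pos by (simp add: continuous_on_eq_continuous_at[OF open_ball])
  have t0: "((\<lambda>t. complex_of_real t) \<longlongrightarrow> 0) (at_right 0)"
    using tendsto_of_real[OF tendsto_ident_at[of "0::real" "{0<..}"]] by simp
  have r0: "((\<lambda>t::real. t) \<longlongrightarrow> 0) (at_right 0)" by (rule tendsto_ident_at)
  have h: "((\<lambda>t. t * Re (wzeta w w' w) - a * Re (G (of_real t))) \<longlongrightarrow> 0 * Re (wzeta w w' w) - a * Re (G 0)) (at_right 0)"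
    by (intro tendsto_diff tendsto_mult tendsto_const r0 tendsto_Re isCont_tendsto_compose[OF cG t0])
  have k: "filterlim (\<lambda>t. a * inverse t) at_top (at_right (0::real))"
    by (rule filterlim_tendsto_pos_mult_at_top[OF tendsto_const a filterlim_inverse_at_top_right])
  hence k': "filterlim (\<lambda>t. - (a * inverse t)) at_bot (at_right (0::real))"
    by (simp add: filterlim_uminus_at_top)
  have s: "filterlim (\<lambda>t. (t * Re (wzeta w w' w) - a * Re (G (of_real t))) + - (a * inverse t)) at_bot (at_right 0)"
    using filterlim_tendsto_add_at_bot_iff[OF h, of "\<lambda>t. - (a * inverse t)"] k' by blast
  have ev: "eventually (\<lambda>t. (t * Re (wzeta w w' w) - a * Re (G (of_real t))) + - (a * inverse t)
      = Re (pfun w w' (of_real t))) (at_right 0)"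
    using eventually_at_right_real[OF cc_pos]
  proof eventually_elim
    case (elim t)
    have "complex_of_real t \<in> ball 0 cc - {0}" using elim by (auto simp: dist_norm)
    hence z: "wzeta w w' (of_real t) = 1 / of_real t + G (of_real t)" by (rule G(2))
    have "Re (pfun w w' (of_real t)) = t * Re (wzeta w w' w) - a * Re (wzeta w w' (of_real t))"
      using w_real by (simp add: pfun_def a_def)
    also have "\<dots> = t * Re (wzeta w w' w) - a * (inverse t + Re (G (of_real t)))"
    proof -
      have e: "1 / complex_of_real t = complex_of_real (1 / t)" by simp
      show ?thesis unfolding z e by (simp add: inverse_eq_divide)
    qed
    finally show ?case by (simp add: algebra_simps)
  qed
  show ?thesis using filterlim_cong[OF refl refl ev] s by simp
qed

end


theorem proposition2p2:
  fixes g2 g3 :: real and w w' :: complex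
  assumes disc: "g2 ^ 3 - 27 * g3\<^sup>2 > 0"
    and w_real: "Im w = 0" and w_pos: "Re w > 0"
    and w'_imag: "Re w' = 0" and w'_pos: "Im w' > 0"
    and invariants: "\<forall>z. z \<notin> wlattice w w' \<longrightarrow>
        (deriv (wp w w') z)\<^sup>2 = 4 * (wp w w' z) ^ 3 - of_real g2 * wp w w' z - of_real g3"
  shows
    "(\<forall>x k l. PsiT w w' x k l = vfun w w' x k l * exp ((pfun w w' k + pfun w w' l) / w * x))
   \<and> (\<forall>x k l. k \<notin> wlattice w w' \<and> l \<notin> wlattice w w' \<longrightarrow>
        PsiT w w' x (k + 2 * w) l = - PsiT w w' x k l \<and>
        PsiT w w' x (k + 2 * w') l = PsiT w w' x k l)
   \<and> (\<forall>x k l. vfun w w' (x + 2 * w) k l = vfun w w' x k l)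
   \<and> (\<forall>k. k \<notin> wlattice w w' \<longrightarrow>
        pfun w w' (k + 2 * w) = pfun w w' k \<and>
        pfun w w' (k + 2 * w') = pfun w w' k + pi * \<i> \<and>
        pfun w w' (- k) = - pfun w w' k)
   \<and> (\<forall>k \<in> (closed_segment 0 w' - {0}) \<union> (closed_segment w (w + w') - {w}).
        Re (pfun w w' k) = 0)
   \<and> (\<forall>k \<in> open_segment w' (w + w'). Im (pfun w w' k) = pi / 2)
   \<and> (\<forall>k \<in> closed_segment 0 w - {0}. Im (pfun w w' k) = 0)
   \<and> mono_on {0<..Re w} (\<lambda>t. Re (pfun w w' (of_real t)))
   \<and> filterlim (\<lambda>t. Re (pfun w w' (of_real t))) at_bot (at_right 0)
   \<and> pfun w w' w = 0"
proof -
  interpret wl2 w w' g2 g3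
    by unfold_locales (use w_real w_pos w'_imag w'_pos disc invariants in auto)
  have i5: "\<forall>k \<in> (closed_segment 0 w' - {0}) \<union> (closed_segment w (w + w') - {w}).
        Re (pfun w w' k) = 0"
  proof
    fix k assume k: "k \<in> (closed_segment 0 w' - {0}) \<union> (closed_segment w (w + w') - {w})"
    show "Re (pfun w w' k) = 0"
    proof (cases "k \<in> closed_segment 0 w'")
      case True
      have "Re k = 0" by (rule seg_Re_const[OF True]) (use w'_imag in auto)
      thus ?thesis by (rule Re_p_imag)
    next
      case False
      hence "k \<in> closed_segment w (w + w')" using k by auto
      hence "Re k = Re w" by (rule seg_Re_const) (use w'_imag in auto)
      thus ?thesis by (rule Re_p_w)
    qed
  qed
  have i6: "\<forall>k \<in> open_segment w' (w + w'). Im (pfun w w' k) = pi / 2"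
  proof
    fix k assume "k \<in> open_segment w' (w + w')"
    hence "k \<in> closed_segment w' (w + w')" by (simp add: open_closed_segment)
    hence "Im k = Im w'" by (rule seg_Im_const) (use w_real in auto)
    thus "Im (pfun w w' k) = pi / 2" by (rule Im_p_top)
  qed
  have i7: "\<forall>k \<in> closed_segment 0 w - {0}. Im (pfun w w' k) = 0"
  proof
    fix k assume "k \<in> closed_segment 0 w - {0}"
    hence "k \<in> closed_segment 0 w" by simp
    hence "Im k = 0" by (rule seg_Im_const) (use w_real in auto)
    thus "Im (pfun w w' k) = 0" by (rule Im_p_real)
  qed
  show ?thesis
    using psi_split psi_per1 psi_per2 v_per p_per1 p_per2 p_odd i5 i6 i7 p_mono p_lim p_w
    by blast
qed

end
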